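(* Let $(\Omega,\mathcal F)$ be a measurable space, $\mathcal X$ the set of bounded measurable functions, $\mathcal S$ the set of all submodular capacities on $(\Omega,\mathcal F)$, $\alpha_1,\dots,\alpha_n\in(0,1]$, and $w_1,\dots,w_n\in\mathcal S$. Then for all $X\in\mathcal X$, $$\mathop{\square}_{i=1}^n\mathrm{ES}^{w_i}_{\alpha_i}(X)=\sup\Big\{I_w(X): w\in\mathcal S,\ w(A)\le\min_{1\le i\le n}\frac{w_i(A)}{\alpha_i}\ \text{for all }A\in\mathcal F\Big\},$$ with $\sup\varnothing=-\infty$. In particular, for a submodular capacity $w$, $\mathop{\square}_{i=1}^n\mathrm{ES}^{w}_{\alpha_i}=\mathrm{ES}^w_{\max_i\alpha_i}$.
   Context: A capacity is an increasing function $w:\mathcal F\to\mathbb R$ with $w(\varnothing)=0$, $w(\Omega)=1$; it is submodular if $w(A\cup B)+w(A\cap B)\le w(A)+w(B)$ for all $A,B\in\mathcal F$. $I_w(X)=\int_{-\infty}^0(w(X\ge x)-1)\,\mathrm dx+\int_0^\infty w(X\ge x)\,\mathrm dx$. $\mathrm{VaR}^w_t(X)=\inf\{x\in\mathbb R:w(X\ge x)\le t\}$ and $\mathrm{ES}^w_\alpha(X)=\frac1\alpha\int_0^\alpha\mathrm{VaR}^w_t(X)\,\mathrm dt$. Inf-convolution: $\mathop{\square}_{i=1}^n\rho_i(X)=\inf\{\sum_i\rho_i(X_i): X_i\in\mathcal X,\ \sum_iX_i=X\}$. *)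

theory Defs
  imports "HOL-Analysis.Analysis"
begin

text \<open>Capacities on the measurable space (space M, sets M): increasing on sets M,
  w {} = 0, w (space M) = 1.  Values outside sets M are irrelevant.\<close>
definition capacity :: "'a measure \<Rightarrow> ('a set \<Rightarrow> real) \<Rightarrow> bool" where
  "capacity M w \<longleftrightarrow>
     (\<forall>A\<in>sets M. \<forall>B\<in>sets M. A \<subseteq> B \<longrightarrow> w A \<le> w B) \<and> w {} = 0 \<and> w (space M) = 1"

definition submodular_capacity :: "'a measure \<Rightarrow> ('a set \<Rightarrow> real) \<Rightarrow> bool" where
  "submodular_capacity M w \<longleftrightarrow> capacity M w \<and>
     (\<forall>A\<in>sets M. \<forall>B\<in>sets M. w (A \<union> B) + w (A \<inter> B) \<le> w A + w B)"

definition bdd_meas :: "'a measure \<Rightarrow> ('a \<Rightarrow> real) set" where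
  "bdd_meas M = {X. X \<in> borel_measurable M \<and> (\<exists>c. \<forall>\<omega>\<in>space M. \<bar>X \<omega>\<bar> \<le> c)}"

definition upper_set :: "'a measure \<Rightarrow> ('a \<Rightarrow> real) \<Rightarrow> real \<Rightarrow> 'a set" where
  "upper_set M X x = {\<omega> \<in> space M. x \<le> X \<omega>}"

definition choquet :: "'a measure \<Rightarrow> ('a set \<Rightarrow> real) \<Rightarrow> ('a \<Rightarrow> real) \<Rightarrow> real" where
  "choquet M w X = (LBINT x:{..0}. w (upper_set M X x) - 1) + (LBINT x:{0..}. w (upper_set M X x))"

definition VaR :: "'a measure \<Rightarrow> ('a set \<Rightarrow> real) \<Rightarrow> real \<Rightarrow> ('a \<Rightarrow> real) \<Rightarrow> real" where
  "VaR M w t X = Inf {x. w (upper_set M X x) \<le> t}"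

definition ES :: "'a measure \<Rightarrow> ('a set \<Rightarrow> real) \<Rightarrow> real \<Rightarrow> ('a \<Rightarrow> real) \<Rightarrow> real" where
  "ES M w \<alpha> X = (1 / \<alpha>) * (LBINT t:{0..\<alpha>}. VaR M w t X)"

text \<open>Inf-convolution of \<rho>_0,...,\<rho>_{n-1} over bounded measurable decompositions
  (extended-real valued, as the infimum may be -\<infinity>).\<close>
definition inf_conv :: "'a measure \<Rightarrow> nat \<Rightarrow> (nat \<Rightarrow> ('a \<Rightarrow> real) \<Rightarrow> real) \<Rightarrow> ('a \<Rightarrow> real) \<Rightarrow> ereal" where
  "inf_conv M n \<rho> X = Inf {ereal (\<Sum>i<n. \<rho> i (Y i)) | Y.
       (\<forall>i<n. Y i \<in> bdd_meas M) \<and> (\<forall>\<omega>\<in>space M. (\<Sum>i<n. Y i \<omega>) = X \<omega>)}"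

end

theory Submission
  imports Defs
begin

lemma cap_mono: "capacity M v \<Longrightarrow> A \<in> sets M \<Longrightarrow> B \<in> sets M \<Longrightarrow> A \<subseteq> B \<Longrightarrow> v A \<le> v B"
  unfolding capacity_def by blast

lemma cap_empty: "capacity M v \<Longrightarrow> v {} = 0" unfolding capacity_def by blast
lemma cap_space: "capacity M v \<Longrightarrow> v (space M) = 1" unfolding capacity_def by blast

lemma cap_nonneg: "capacity M v \<Longrightarrow> A \<in> sets M \<Longrightarrow> 0 \<le> v A"
  using cap_mono[of M v "{}" A] cap_empty[of M v] by auto

lemma cap_le1: "capacity M v \<Longrightarrow> A \<in> sets M \<Longrightarrow> v A \<le> 1"
  using cap_mono[of M v A "space M"] cap_space[of M v] sets.sets_into_space by auto

lemma cap_space_ne: "capacity M v \<Longrightarrow> space M \<noteq> {}"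
  using cap_empty[of M v] cap_space[of M v] by auto

lemma upper_set_sets[measurable]: "X \<in> borel_measurable M \<Longrightarrow> upper_set M X x \<in> sets M"
  unfolding upper_set_def by measurable

lemma upper_set_anti: "x \<le> y \<Longrightarrow> upper_set M X y \<subseteq> upper_set M X x"
  unfolding upper_set_def by auto

lemma upper_set_low: "(\<forall>\<omega>\<in>space M. x \<le> X \<omega>) \<Longrightarrow> upper_set M X x = space M"
  unfolding upper_set_def by auto

lemma upper_set_high: "(\<forall>\<omega>\<in>space M. X \<omega> < x) \<Longrightarrow> upper_set M X x = {}"
  unfolding upper_set_def by force

lemma g_anti: "capacity M v \<Longrightarrow> X \<in> borel_measurable M \<Longrightarrow> x \<le> y \<Longrightarrow>
   v (upper_set M X y) \<le> v (upper_set M X x)"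
  by (intro cap_mono upper_set_sets upper_set_anti) auto

lemma antitone_meas:
  fixes g :: "real \<Rightarrow> real"
  assumes "\<And>x y. x \<le> y \<Longrightarrow> g y \<le> g x"
  shows "g \<in> borel_measurable borel"
proof -
  have "(\<lambda>x. - g x) \<in> borel_measurable borel"
    by (rule borel_measurable_mono) (auto simp: mono_def assms)
  then have "(\<lambda>x. - (- g x)) \<in> borel_measurable borel" by measurable
  then show ?thesis by simp
qed

lemma antitone_integrable:
  fixes g :: "real \<Rightarrow> real"
  assumes "\<And>x y. x \<le> y \<Longrightarrow> g y \<le> g x"
  shows "g integrable_on {a..b}"
proof -
  have "(\<lambda>x. - g x) integrable_on {a..b}"
    by (rule integrable_on_mono_on) (auto simp: mono_on_def assms)
  then have "(\<lambda>x. - (- g x)) integrable_on {a..b}" by (rule integrable_neg)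
  then show ?thesis by simp
qed

lemma g_meas: "capacity M v \<Longrightarrow> X \<in> borel_measurable M \<Longrightarrow>
   (\<lambda>x. v (upper_set M X x)) \<in> borel_measurable borel"
  by (rule antitone_meas) (rule g_anti)

lemma g_int: "capacity M v \<Longrightarrow> X \<in> borel_measurable M \<Longrightarrow>
   (\<lambda>x. v (upper_set M X x)) integrable_on {a..b}"
  by (rule antitone_integrable) (rule g_anti)

lemma set_int_bounded_interval:
  fixes g :: "real \<Rightarrow> real"
  assumes "g \<in> borel_measurable borel" "\<And>x. \<bar>g x\<bar> \<le> B"
  shows "set_integrable lborel {c..d} g"
  unfolding set_integrable_def
  by (rule integrableI_bounded_set_indicator[where B=B]) (use assms in \<open>auto simp: emeasure_lborel_Icc_eq\<close>)

lemma choquet_nf: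
  assumes cap: "capacity M v" and Xm: "X \<in> borel_measurable M"
    and bnd: "\<And>\<omega>. \<omega> \<in> space M \<Longrightarrow> a \<le> X \<omega> \<and> X \<omega> \<le> b"
  shows "choquet M v X = a + integral {a..b} (\<lambda>x. v (upper_set M X x))"
proof -
  define g where "g = (\<lambda>x. v (upper_set M X x))"
  have gm: "g \<in> borel_measurable borel" unfolding g_def by (rule g_meas[OF cap Xm])
  have gi: "\<And>c d. g integrable_on {c..d}" unfolding g_def by (rule g_int[OF cap Xm])
  have g01: "\<bar>g x\<bar> \<le> 1" for x
    unfolding g_def using cap_nonneg[OF cap] cap_le1[OF cap] upper_set_sets[OF Xm] by force
  have g1: "g x = 1" if "x \<le> a" for x
    unfolding g_def using upper_set_low[of M x X] bnd that cap_space[OF cap] by force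
  have g0: "g x = 0" if "x > b" for x
    unfolding g_def using upper_set_high[of M X x] bnd that cap_empty[OF cap] by force
  obtain w where "w \<in> space M" using cap_space_ne[OF cap] by blast
  then have ab: "a \<le> b" using bnd by force
  define c where "c = min a 0"
  define d where "d = max b 0"
  have c: "c \<le> a" "c \<le> 0" and d: "b \<le> d" "0 \<le> d" unfolding c_def d_def by auto
  have e1: "(LBINT x:{..0}. g x - 1) = (LBINT x:{c..0}. g x - 1)"
  proof -
    have "(\<lambda>x. indicator {..0} x *\<^sub>R (g x - 1)) = (\<lambda>x. indicator {c..0} x *\<^sub>R (g x - 1))"
      using g1 c by (auto simp: indicator_def fun_eq_iff)
    then show ?thesis unfolding set_lebesgue_integral_def by simp
  qed
  have e2: "(LBINT x:{0..}. g x) = (LBINT x:{0..d}. g x)"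
  proof -
    have "(\<lambda>x. indicator {0..} x *\<^sub>R g x) = (\<lambda>x. indicator {0..d} x *\<^sub>R g x)"
      using g0 d by (auto simp: indicator_def fun_eq_iff)
    then show ?thesis unfolding set_lebesgue_integral_def by simp
  qed
  have e3: "(LBINT x:{c..0}. g x - 1) = integral {c..0} (\<lambda>x. g x - 1)"
    by (rule set_borel_integral_eq_integral(2), rule set_int_bounded_interval[where B=2])
      (use gm g01 in \<open>auto simp: abs_le_iff\<close>)
  have e4: "(LBINT x:{0..d}. g x) = integral {0..d} g"
    by (rule set_borel_integral_eq_integral(2), rule set_int_bounded_interval[where B=1])
      (use gm g01 in auto)
  have e5: "integral {c..0} (\<lambda>x. g x - 1) = integral {c..0} g + c"
    using integral_diff[OF gi[of c 0] integrable_const_ivl[of 1 c 0]] c by simp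
  have e6: "integral {c..0} g + integral {0..d} g = integral {c..d} g"
    by (rule Henstock_Kurzweil_Integration.integral_combine) (use c d gi in auto)
  have e7: "integral {c..a} g + integral {a..d} g = integral {c..d} g"
    by (rule Henstock_Kurzweil_Integration.integral_combine) (use c d ab gi in auto)
  have e8: "integral {a..b} g + integral {b..d} g = integral {a..d} g"
    by (rule Henstock_Kurzweil_Integration.integral_combine) (use c d ab gi in auto)
  have e9: "integral {c..a} g = a - c"
  proof -
    have "integral {c..a} g = integral {c..a} (\<lambda>x. 1)"
      by (rule integral_cong) (use g1 in auto)
    then show ?thesis using c by simp
  qed
  have e10: "integral {b..d} g = 0"
  proof -
    have "integral {b..d} g = integral {b..d} (\<lambda>x. 0)"
      by (rule integral_spike[where S="{b}"]) (use g0 in auto)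
    then show ?thesis by simp
  qed
  have "choquet M v X = (LBINT x:{..0}. g x - 1) + (LBINT x:{0..}. g x)"
    unfolding choquet_def g_def by simp
  then show ?thesis
    unfolding g_def[symmetric] e1 e2 e3 e4 e5
    using e6 e7 e8 e9 e10 by linarith
qed

lemma riemann_bounds:
  fixes g :: "real \<Rightarrow> real"
  assumes anti: "\<And>x y. x \<le> y \<Longrightarrow> g y \<le> g x" and dp: "0 < \<delta>"
  shows "\<delta> * (\<Sum>k\<in>{1..K}. g (a + real k * \<delta>)) \<le> integral {a..a + real K * \<delta>} g
       \<and> integral {a..a + real K * \<delta>} g \<le> \<delta> * (\<Sum>k\<in>{..<K}. g (a + real k * \<delta>))"
proof (induction K)
  case 0
  then show ?case by simp
next
  case (Suc K)
  let ?p = "a + real K * \<delta>"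
  have gi: "\<And>c d. g integrable_on {c..d}" by (rule antitone_integrable[OF anti])
  have split: "integral {a..?p} g + integral {?p..?p + \<delta>} g = integral {a..?p+\<delta>} g"
    by (rule Henstock_Kurzweil_Integration.integral_combine) (use dp gi in auto)
  have lo: "\<delta> * g (?p + \<delta>) \<le> integral {?p..?p + \<delta>} g"
  proof -
    have "integral {?p..?p + \<delta>} (\<lambda>x. g (?p + \<delta>)) \<le> integral {?p..?p + \<delta>} g"
      by (rule integral_le) (use gi anti in auto)
    then show ?thesis using dp by (simp add: mult.commute)
  qed
  have hi: "integral {?p..?p + \<delta>} g \<le> \<delta> * g ?p"
  proof -
    have "integral {?p..?p + \<delta>} g \<le> integral {?p..?p + \<delta>} (\<lambda>x. g ?p)"
      by (rule integral_le) (use gi anti in auto)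
    then show ?thesis using dp by (simp add: mult.commute)
  qed
  have eq: "a + real (Suc K) * \<delta> = ?p + \<delta>" by (simp add: algebra_simps)
  have s1: "(\<Sum>k\<in>{1..Suc K}. g (a + real k * \<delta>)) = (\<Sum>k\<in>{1..K}. g (a + real k * \<delta>)) + g (?p + \<delta>)"
    using eq by (simp add: sum.cl_ivl_Suc add.assoc)
  have s2: "(\<Sum>k\<in>{..<Suc K}. g (a + real k * \<delta>)) = (\<Sum>k\<in>{..<K}. g (a + real k * \<delta>)) + g ?p"
    by simp
  show ?case unfolding eq s1 s2 distrib_left
    using Suc split lo hi by linarith
qed

lemma bdd_measD: "X \<in> bdd_meas M \<Longrightarrow> X \<in> borel_measurable M"
  unfolding bdd_meas_def by auto

lemma bdd_measE: assumes "X \<in> bdd_meas M"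
  obtains c where "\<And>\<omega>. \<omega> \<in> space M \<Longrightarrow> \<bar>X \<omega>\<bar> \<le> c"
  using assms unfolding bdd_meas_def by auto

lemma bdd_meas_add: "X \<in> bdd_meas M \<Longrightarrow> Y \<in> bdd_meas M \<Longrightarrow> (\<lambda>\<omega>. X \<omega> + Y \<omega>) \<in> bdd_meas M"
proof -
  assume a: "X \<in> bdd_meas M" "Y \<in> bdd_meas M"
  then obtain c d where "\<And>\<omega>. \<omega> \<in> space M \<Longrightarrow> \<bar>X \<omega>\<bar> \<le> c" "\<And>\<omega>. \<omega> \<in> space M \<Longrightarrow> \<bar>Y \<omega>\<bar> \<le> d"
    by (metis bdd_measE)
  then have "\<forall>\<omega>\<in>space M. \<bar>X \<omega> + Y \<omega>\<bar> \<le> c + d" by (meson abs_triangle_ineq add_mono order_trans)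
  then show ?thesis using a unfolding bdd_meas_def by auto
qed

lemma bdd_meas_scale: "X \<in> bdd_meas M \<Longrightarrow> (\<lambda>\<omega>. r * X \<omega>) \<in> bdd_meas M"
proof -
  assume a: "X \<in> bdd_meas M"
  then obtain c where c: "\<And>\<omega>. \<omega> \<in> space M \<Longrightarrow> \<bar>X \<omega>\<bar> \<le> c" by (metis bdd_measE)
  then have "\<forall>\<omega>\<in>space M. \<bar>r * X \<omega>\<bar> \<le> \<bar>r\<bar> * c" by (simp add: abs_mult mult_left_mono)
  then show ?thesis using a unfolding bdd_meas_def by auto
qed

lemma bdd_meas_const: "(\<lambda>\<omega>. r) \<in> bdd_meas M"
  unfolding bdd_meas_def by auto

lemma bdd_meas_ind: "A \<in> sets M \<Longrightarrow> (indicator A :: 'a \<Rightarrow> real) \<in> bdd_meas M"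
  unfolding bdd_meas_def by (auto intro!: exI[of _ 1] simp: indicator_def)

lemma bdd_meas_bounds: assumes "X \<in> bdd_meas M"
  obtains a b where "\<And>\<omega>. \<omega> \<in> space M \<Longrightarrow> a \<le> X \<omega> \<and> X \<omega> \<le> b"
proof -
  obtain c where c: "\<And>\<omega>. \<omega> \<in> space M \<Longrightarrow> \<bar>X \<omega>\<bar> \<le> c" using bdd_measE[OF assms] by blast
  show thesis
  proof (rule that[of "-c" c])
    fix \<omega> assume "\<omega> \<in> space M"
    with c[of \<omega>] show "-c \<le> X \<omega> \<and> X \<omega> \<le> c" by arith
  qed
qed

lemma choquet_cong: "(\<And>\<omega>. \<omega> \<in> space M \<Longrightarrow> X \<omega> = Y \<omega>) \<Longrightarrow> choquet M v X = choquet M v Y"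
proof -
  assume "\<And>\<omega>. \<omega> \<in> space M \<Longrightarrow> X \<omega> = Y \<omega>"
  then have "upper_set M X = upper_set M Y" unfolding upper_set_def by (auto simp: fun_eq_iff)
  then show ?thesis unfolding choquet_def by simp
qed

lemma choquet_mono:
  assumes cap: "capacity M u" "capacity M v" and uv: "\<And>A. A \<in> sets M \<Longrightarrow> u A \<le> v A"
    and X: "X \<in> bdd_meas M" and Y: "Y \<in> bdd_meas M"
    and XY: "\<And>\<omega>. \<omega> \<in> space M \<Longrightarrow> X \<omega> \<le> Y \<omega>"
  shows "choquet M u X \<le> choquet M v Y"
proof -
  obtain a1 b1 where 1: "\<And>\<omega>. \<omega> \<in> space M \<Longrightarrow> a1 \<le> X \<omega> \<and> X \<omega> \<le> b1" using bdd_meas_bounds[OF X] by blast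
  obtain a2 b2 where 2: "\<And>\<omega>. \<omega> \<in> space M \<Longrightarrow> a2 \<le> Y \<omega> \<and> Y \<omega> \<le> b2" using bdd_meas_bounds[OF Y] by blast
  define a where "a = min a1 a2"
  define b where "b = max b1 b2"
  have Xm: "X \<in> borel_measurable M" and Ym: "Y \<in> borel_measurable M" using X Y bdd_measD by auto
  have nX: "choquet M u X = a + integral {a..b} (\<lambda>x. u (upper_set M X x))"
    by (rule choquet_nf[OF cap(1) Xm]) (use 1 a_def b_def in force)
  have nY: "choquet M v Y = a + integral {a..b} (\<lambda>x. v (upper_set M Y x))"
    by (rule choquet_nf[OF cap(2) Ym]) (use 2 a_def b_def in force)
  have "integral {a..b} (\<lambda>x. u (upper_set M X x)) \<le> integral {a..b} (\<lambda>x. v (upper_set M Y x))"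
  proof (rule integral_le)
    show "(\<lambda>x. u (upper_set M X x)) integrable_on {a..b}" by (rule g_int[OF cap(1) Xm])
    show "(\<lambda>x. v (upper_set M Y x)) integrable_on {a..b}" by (rule g_int[OF cap(2) Ym])
    fix x
    have "upper_set M X x \<subseteq> upper_set M Y x" using XY unfolding upper_set_def by force
    then have "v (upper_set M X x) \<le> v (upper_set M Y x)"
      by (intro cap_mono[OF cap(2)] upper_set_sets Xm Ym)
    moreover have "u (upper_set M X x) \<le> v (upper_set M X x)" by (intro uv upper_set_sets Xm)
    ultimately show "u (upper_set M X x) \<le> v (upper_set M Y x)" by linarith
  qed
  then show ?thesis using nX nY by linarith
qed

lemma choquet_const: "capacity M v \<Longrightarrow> choquet M v (\<lambda>\<omega>. r) = r"
  using choquet_nf[of M v "\<lambda>\<omega>. r" r r] by simp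

lemma choquet_ind:
  assumes cap: "capacity M v" and A: "A \<in> sets M"
  shows "choquet M v (indicator A) = v A"
proof -
  have "choquet M v (indicator A) = 0 + integral {0..1} (\<lambda>x. v (upper_set M (indicator A) x))"
    by (rule choquet_nf[OF cap]) (use A in \<open>auto simp: indicator_def\<close>)
  also have "integral {0..1} (\<lambda>x. v (upper_set M (indicator A) x)) = integral {0..1} (\<lambda>x::real. v A)"
  proof (rule integral_spike[where S="{0}"])
    fix x :: real assume "x \<in> {0..1} - {0}"
    then have "upper_set M (indicator A) x = A"
      using sets.sets_into_space[OF A] unfolding upper_set_def by (auto simp: indicator_def)
    then show "v A = v (upper_set M (indicator A) x)" by simp
  qed auto
  finally show ?thesis by simp
qed

lemma choquet_scale:
  assumes cap: "capacity M v" and X: "X \<in> bdd_meas M" and r: "0 < r"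
  shows "choquet M v (\<lambda>\<omega>. r * X \<omega>) = r * choquet M v X"
proof -
  obtain a b where ab: "\<And>\<omega>. \<omega> \<in> space M \<Longrightarrow> a \<le> X \<omega> \<and> X \<omega> \<le> b" using bdd_meas_bounds[OF X] by blast
  have Xm: "X \<in> borel_measurable M" using X bdd_measD by auto
  have rXm: "(\<lambda>\<omega>. r * X \<omega>) \<in> borel_measurable M" using Xm by measurable
  define g where "g = (\<lambda>x. v (upper_set M X x))"
  have n1: "choquet M v X = a + integral {a..b} g" unfolding g_def by (rule choquet_nf[OF cap Xm ab])
  have n2: "choquet M v (\<lambda>\<omega>. r * X \<omega>) = r * a + integral {r*a..r*b} (\<lambda>x. v (upper_set M (\<lambda>\<omega>. r * X \<omega>) x))"
    by (rule choquet_nf[OF cap rXm]) (use ab r in auto)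
  have us: "upper_set M (\<lambda>\<omega>. r * X \<omega>) x = upper_set M X (x / r)" for x
    unfolding upper_set_def using r by (auto simp: field_simps)
  have hi: "(g has_integral integral {a..b} g) (cbox a b)"
    using g_int[OF cap Xm] unfolding g_def box_real by (simp add: integrable_integral)
  from has_integral_affinity'[OF hi, of "1/r" 0] r
  have "((\<lambda>x. g (x / r)) has_integral (r * integral {a..b} g)) {r*a..r*b}"
    by (simp add: field_simps)
  then have "integral {r*a..r*b} (\<lambda>x. g (x / r)) = r * integral {a..b} g"
    by (rule integral_unique)
  moreover have "(\<lambda>x. v (upper_set M X (x / r))) = (\<lambda>x. g (x / r))" by (simp add: g_def)
  ultimately show ?thesis unfolding n1 n2 us by (simp add: distrib_left)
qed

definition lev :: "'a measure \<Rightarrow> ('a \<Rightarrow> nat) \<Rightarrow> nat \<Rightarrow> 'a set" where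
  "lev M Z k = {\<omega> \<in> space M. k \<le> Z \<omega>}"

definition JJ :: "'a measure \<Rightarrow> ('a set \<Rightarrow> real) \<Rightarrow> nat \<Rightarrow> ('a \<Rightarrow> nat) \<Rightarrow> real" where
  "JJ M v K Z = (\<Sum>k\<in>{1..K}. v (lev M Z k))"

lemma lev_0[simp]: "lev M Z 0 = space M" unfolding lev_def by auto

lemma lev_anti: "k \<le> k' \<Longrightarrow> lev M Z k' \<subseteq> lev M Z k" unfolding lev_def by auto

lemma lev_add_ind_Suc: "B \<subseteq> space M \<Longrightarrow>
  lev M (\<lambda>\<omega>. Z \<omega> + of_bool (\<omega> \<in> B)) (Suc k) = lev M Z (Suc k) \<union> (B \<inter> lev M Z k)"
  unfolding lev_def by auto

lemma lev_cong: "(\<And>\<omega>. \<omega> \<in> space M \<Longrightarrow> Z \<omega> = Z' \<omega>) \<Longrightarrow> lev M Z = lev M Z'"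
  unfolding lev_def by (auto simp: fun_eq_iff)

lemma JJ_cong: "(\<And>\<omega>. \<omega> \<in> space M \<Longrightarrow> Z \<omega> = Z' \<omega>) \<Longrightarrow> JJ M v K Z = JJ M v K Z'"
  unfolding JJ_def using lev_cong[of M Z Z'] by simp

lemma lev_add_ind_meas:
  assumes "\<And>k. lev M Z k \<in> sets M" "B \<in> sets M"
  shows "lev M (\<lambda>\<omega>. Z \<omega> + of_bool (\<omega> \<in> B)) k \<in> sets M"
proof (cases k)
  case 0 then show ?thesis by simp
next
  case (Suc k') then show ?thesis
    using lev_add_ind_Suc[OF sets.sets_into_space[OF assms(2)], of Z k'] assms by auto
qed

lemma submod_cap: "submodular_capacity M v \<Longrightarrow> capacity M v" unfolding submodular_capacity_def by auto

lemma submodD: "submodular_capacity M v \<Longrightarrow> A \<in> sets M \<Longrightarrow> B \<in> sets M \<Longrightarrow> v (A \<union> B) + v (A \<inter> B) \<le> v A + v B"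
  unfolding submodular_capacity_def by auto

lemma JJ_step:
  assumes v: "submodular_capacity M v" and Z: "\<And>k. lev M Z k \<in> sets M" and B: "B \<in> sets M"
  shows "(\<Sum>k\<in>{1..K}. v (lev M (\<lambda>\<omega>. Z \<omega> + of_bool (\<omega> \<in> B)) k)) + v (B \<inter> lev M Z K)
          \<le> (\<Sum>k\<in>{1..K}. v (lev M Z k)) + v B"
proof (induction K)
  case 0
  have "B \<inter> space M = B" using sets.sets_into_space[OF B] by auto
  then show ?case by simp
next
  case (Suc K)
  have Bs: "B \<subseteq> space M" using sets.sets_into_space[OF B] .
  let ?L = "lev M Z (Suc K)" and ?E = "B \<inter> lev M Z K"
  have e1: "lev M (\<lambda>\<omega>. Z \<omega> + of_bool (\<omega> \<in> B)) (Suc K) = ?L \<union> ?E"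
    by (rule lev_add_ind_Suc[OF Bs])
  have e2: "?L \<inter> ?E = B \<inter> lev M Z (Suc K)" using lev_anti[of K "Suc K" M Z] by auto
  have sm: "v (?L \<union> ?E) + v (?L \<inter> ?E) \<le> v ?L + v ?E"
    by (rule submodD[OF v]) (use Z B in auto)
  show ?case using Suc sm unfolding e2 by (simp add: e1)
qed

lemma JJ_add_ind:
  assumes v: "submodular_capacity M v" and Z: "\<And>k. lev M Z k \<in> sets M" and B: "B \<in> sets M"
  shows "JJ M v K (\<lambda>\<omega>. Z \<omega> + of_bool (\<omega> \<in> B)) \<le> JJ M v K Z + v B"
  using JJ_step[OF assms, of K] cap_nonneg[OF submod_cap[OF v], of "B \<inter> lev M Z K"] Z B
  unfolding JJ_def by auto

lemma JJ_add_sum: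
  assumes v: "submodular_capacity M v" and Z: "\<And>k. lev M Z k \<in> sets M"
    and F: "finite F" and B: "\<And>j. j \<in> F \<Longrightarrow> B j \<in> sets M"
  shows "JJ M v K (\<lambda>\<omega>. Z \<omega> + (\<Sum>j\<in>F. of_bool (\<omega> \<in> B j))) \<le> JJ M v K Z + (\<Sum>j\<in>F. v (B j))
     \<and> (\<forall>k. lev M (\<lambda>\<omega>. Z \<omega> + (\<Sum>j\<in>F. of_bool (\<omega> \<in> B j))) k \<in> sets M)"
  using F B
proof (induction F rule: finite_induct)
  case empty
  then show ?case using Z by simp
next
  case (insert j F)
  define Z' where "Z' = (\<lambda>\<omega>. Z \<omega> + (\<Sum>j\<in>F. of_bool (\<omega> \<in> B j)))"
  have IH: "JJ M v K Z' \<le> JJ M v K Z + (\<Sum>j\<in>F. v (B j))" "\<And>k. lev M Z' k \<in> sets M"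
    using insert unfolding Z'_def by auto
  have eq: "(\<lambda>\<omega>. Z \<omega> + (\<Sum>j\<in>insert j F. of_bool (\<omega> \<in> B j))) = (\<lambda>\<omega>. Z' \<omega> + of_bool (\<omega> \<in> B j))"
    using insert unfolding Z'_def by (auto simp: fun_eq_iff)
  have Bj: "B j \<in> sets M" using insert by auto
  show ?case unfolding eq
    using JJ_add_ind[OF v IH(2) Bj, of K] IH(1) lev_add_ind_meas[OF IH(2) Bj] insert by auto
qed

lemma lev_sum_meas:
  assumes "\<And>k. lev M Z1 k \<in> sets M" "\<And>k. lev M Z2 k \<in> sets M"
  shows "lev M (\<lambda>\<omega>. Z1 \<omega> + Z2 \<omega>) k \<in> sets M"
proof -
  have "lev M (\<lambda>\<omega>. Z1 \<omega> + Z2 \<omega>) k = (\<Union>i\<in>{..k}. lev M Z1 i \<inter> lev M Z2 (k - i))"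
  proof (intro set_eqI iffI)
    fix \<omega> assume "\<omega> \<in> lev M (\<lambda>\<omega>. Z1 \<omega> + Z2 \<omega>) k"
    then show "\<omega> \<in> (\<Union>i\<in>{..k}. lev M Z1 i \<inter> lev M Z2 (k - i))"
      unfolding lev_def by (intro UN_I[of "min k (Z1 \<omega>)"]) auto
  qed (auto simp: lev_def)
  then show ?thesis using assms by auto
qed

lemma sum_of_bool_le: "n \<le> K \<Longrightarrow> (\<Sum>k\<in>{1..K}. of_bool (k \<le> n) :: nat) = n"
proof -
  assume n: "n \<le> K"
  have "{1..K} \<inter> {k. k \<le> n} = {1..n}" using n by auto
  then show ?thesis by simp
qed

definition disc :: "('a \<Rightarrow> real) \<Rightarrow> real \<Rightarrow> real \<Rightarrow> nat \<Rightarrow> 'a \<Rightarrow> nat" where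
  "disc X a \<delta> K \<omega> = min K (nat \<lfloor>(X \<omega> - a) / \<delta>\<rfloor>)"

lemma lev_disc:
  assumes "0 < \<delta>" "1 \<le> k" "k \<le> K"
  shows "lev M (disc X a \<delta> K) k = upper_set M X (a + real k * \<delta>)"
proof -
  have "k \<le> nat \<lfloor>(X \<omega> - a) / \<delta>\<rfloor> \<longleftrightarrow> a + real k * \<delta> \<le> X \<omega>" for \<omega>
  proof -
    have "k \<le> nat \<lfloor>(X \<omega> - a) / \<delta>\<rfloor> \<longleftrightarrow> int k \<le> \<lfloor>(X \<omega> - a) / \<delta>\<rfloor>" using assms by linarith
    also have "\<dots> \<longleftrightarrow> real k \<le> (X \<omega> - a) / \<delta>" by (simp add: le_floor_iff)
    also have "\<dots> \<longleftrightarrow> a + real k * \<delta> \<le> X \<omega>" using assms by (simp add: field_simps)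
    finally show ?thesis .
  qed
  then show ?thesis unfolding lev_def upper_set_def disc_def using assms by auto
qed

lemma lev_disc_big: "K < k \<Longrightarrow> lev M (disc X a \<delta> K) k = {}"
  unfolding lev_def disc_def by auto

lemma lev_disc_meas:
  assumes "0 < \<delta>" "X \<in> borel_measurable M"
  shows "lev M (disc X a \<delta> K) k \<in> sets M"
proof -
  consider "k = 0" | "1 \<le> k \<and> k \<le> K" | "K < k" by linarith
  then show ?thesis
    using lev_disc[OF assms(1), of k K M X a] lev_disc_big[of K k M X a \<delta>] upper_set_sets[OF assms(2)]
    by cases auto
qed

lemma disc_sum: "disc X a \<delta> K \<omega> = (\<Sum>k\<in>{1..K}. of_bool (k \<le> disc X a \<delta> K \<omega>))"
  using sum_of_bool_le[of "disc X a \<delta> K \<omega>" K] unfolding disc_def by simp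

lemma disc_upper:
  assumes "0 < \<delta>" "a \<le> X \<omega>" "X \<omega> \<le> a + real K * \<delta>"
  shows "X \<omega> < a + (real (disc X a \<delta> K \<omega>) + 1) * \<delta>"
proof (cases "K \<le> nat \<lfloor>(X \<omega> - a) / \<delta>\<rfloor>")
  case True
  then have "disc X a \<delta> K \<omega> = K" unfolding disc_def by simp
  then show ?thesis using assms by (simp add: algebra_simps)
next
  case False
  then have d: "disc X a \<delta> K \<omega> = nat \<lfloor>(X \<omega> - a) / \<delta>\<rfloor>" unfolding disc_def by simp
  have "0 \<le> (X \<omega> - a) / \<delta>" using assms by simp
  then have "real (nat \<lfloor>(X \<omega> - a) / \<delta>\<rfloor>) = of_int \<lfloor>(X \<omega> - a) / \<delta>\<rfloor>" by simp
  moreover have "(X \<omega> - a) / \<delta> < of_int \<lfloor>(X \<omega> - a) / \<delta>\<rfloor> + 1" by linarith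
  ultimately have "(X \<omega> - a) / \<delta> < real (disc X a \<delta> K \<omega>) + 1" using d by simp
  then show ?thesis using assms by (simp add: field_simps)
qed

lemma JJ_disc:
  assumes v: "submodular_capacity M v" and d: "0 < \<delta>" and Xm: "X \<in> borel_measurable M"
  shows "JJ M v K' (disc X a \<delta> K) \<le> (\<Sum>k\<in>{1..K}. v (upper_set M X (a + real k * \<delta>)))"
proof -
  let ?Z = "disc X a \<delta> K"
  have "JJ M v K' ?Z = JJ M v K' (\<lambda>\<omega>. 0 + (\<Sum>k\<in>{1..K}. of_bool (\<omega> \<in> lev M ?Z k)))"
    by (rule JJ_cong) (subst disc_sum, auto simp: lev_def)
  also have "\<dots> \<le> JJ M v K' (\<lambda>\<omega>. 0) + (\<Sum>k\<in>{1..K}. v (lev M ?Z k))"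
    using JJ_add_sum[OF v, of "\<lambda>\<omega>. 0" "{1..K}" "lev M ?Z" K'] lev_disc_meas[OF d Xm]
    by (auto simp: lev_def)
  also have "JJ M v K' (\<lambda>\<omega>. 0) = 0"
    unfolding JJ_def lev_def using cap_empty[OF submod_cap[OF v]] by simp
  also have "(\<Sum>k\<in>{1..K}. v (lev M ?Z k)) = (\<Sum>k\<in>{1..K}. v (upper_set M X (a + real k * \<delta>)))"
    by (rule sum.cong) (auto simp: lev_disc[OF d])
  finally show ?thesis by simp
qed

lemma shift_sum_bound:
  fixes f :: "nat \<Rightarrow> real"
  assumes nn: "\<And>k. 0 \<le> f k" and f0: "f 0 \<le> 1"
  shows "(\<Sum>k<N. f (k - 1)) \<le> 2 + (\<Sum>k\<in>{1..N}. f k)"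
proof -
  have eq: "(\<Sum>k<Suc N. f (k - 1)) = f 0 + (\<Sum>k<N. f k)" for N
    by (induction N) auto
  have "(\<Sum>k<N. f (k - 1)) \<le> (\<Sum>k<Suc N. f (k - 1))" using nn by simp
  also have "\<dots> = f 0 + (\<Sum>k<N. f k)" by (rule eq)
  also have "(\<Sum>k<N. f k) \<le> (\<Sum>k\<in>insert 0 {1..N}. f k)"
    by (rule sum_mono2) (use nn in auto)
  also have "(\<Sum>k\<in>insert 0 {1..N}. f k) = f 0 + (\<Sum>k\<in>{1..N}. f k)" by simp
  finally show ?thesis using f0 by linarith
qed

lemma choquet_subadd_eps:
  assumes v: "submodular_capacity M v" and X: "X \<in> bdd_meas M" and Y: "Y \<in> bdd_meas M"
    and d: "0 < \<delta>"
  shows "choquet M v (\<lambda>\<omega>. X \<omega> + Y \<omega>) \<le> choquet M v X + choquet M v Y + 2 * \<delta>"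
proof -
  have cap: "capacity M v" by (rule submod_cap[OF v])
  obtain a b where ab: "\<And>\<omega>. \<omega> \<in> space M \<Longrightarrow> a \<le> X \<omega> \<and> X \<omega> \<le> b" using bdd_meas_bounds[OF X] by blast
  obtain c e where ce: "\<And>\<omega>. \<omega> \<in> space M \<Longrightarrow> c \<le> Y \<omega> \<and> Y \<omega> \<le> e" using bdd_meas_bounds[OF Y] by blast
  have Xm: "X \<in> borel_measurable M" and Ym: "Y \<in> borel_measurable M" using X Y bdd_measD by auto
  have Sm: "(\<lambda>\<omega>. X \<omega> + Y \<omega>) \<in> borel_measurable M" using Xm Ym by measurable
  define K where "K = nat \<lceil>max (b - a) (e - c) / \<delta>\<rceil>"
  have "max (b - a) (e - c) / \<delta> \<le> real K" unfolding K_def by linarith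
  then have "max (b - a) (e - c) \<le> real K * \<delta>" using d by (simp add: field_simps)
  then have Kb: "b \<le> a + real K * \<delta>" "e \<le> c + real K * \<delta>" by auto
  define gX where "gX = (\<lambda>x. v (upper_set M X x))"
  define gY where "gY = (\<lambda>x. v (upper_set M Y x))"
  define gS where "gS = (\<lambda>x. v (upper_set M (\<lambda>\<omega>. X \<omega> + Y \<omega>) x))"
  have nX: "choquet M v X = a + integral {a..a + real K * \<delta>} gX"
    unfolding gX_def by (rule choquet_nf[OF cap Xm]) (use ab Kb in force)
  have nY: "choquet M v Y = c + integral {c..c + real K * \<delta>} gY"
    unfolding gY_def by (rule choquet_nf[OF cap Ym]) (use ce Kb in force)
  have nS: "choquet M v (\<lambda>\<omega>. X \<omega> + Y \<omega>) = (a + c) + integral {a + c..(a + c) + real (2 * K) * \<delta>} gS"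
    unfolding gS_def by (rule choquet_nf[OF cap Sm]) (use ab ce Kb in \<open>force simp: algebra_simps\<close>)
  have antiX: "\<And>x y. x \<le> y \<Longrightarrow> gX y \<le> gX x" unfolding gX_def by (rule g_anti[OF cap Xm])
  have antiY: "\<And>x y. x \<le> y \<Longrightarrow> gY y \<le> gY x" unfolding gY_def by (rule g_anti[OF cap Ym])
  have antiS: "\<And>x y. x \<le> y \<Longrightarrow> gS y \<le> gS x" unfolding gS_def by (rule g_anti[OF cap Sm])
  have rX: "\<delta> * (\<Sum>k\<in>{1..K}. gX (a + real k * \<delta>)) \<le> integral {a..a + real K * \<delta>} gX"
    using riemann_bounds[where g=gX, OF antiX d] by blast
  have rY: "\<delta> * (\<Sum>k\<in>{1..K}. gY (c + real k * \<delta>)) \<le> integral {c..c + real K * \<delta>} gY"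
    using riemann_bounds[where g=gY, OF antiY d] by blast
  have rS: "integral {a + c..(a + c) + real (2 * K) * \<delta>} gS \<le> \<delta> * (\<Sum>k<2 * K. gS ((a + c) + real k * \<delta>))"
    using riemann_bounds[where g=gS, OF antiS d] by blast
  define nX where "nX = disc X a \<delta> K"
  define nY where "nY = disc Y c \<delta> K"
  define Z where "Z = (\<lambda>\<omega>. nX \<omega> + nY \<omega>)"
  have lX: "\<And>k. lev M nX k \<in> sets M" unfolding nX_def by (rule lev_disc_meas[OF d Xm])
  have lY: "\<And>k. lev M nY k \<in> sets M" unfolding nY_def by (rule lev_disc_meas[OF d Ym])
  have lZ: "\<And>k. lev M Z k \<in> sets M" unfolding Z_def by (rule lev_sum_meas[OF lX lY])
  have gS_le: "gS ((a + c) + real k * \<delta>) \<le> v (lev M Z (k - 1))" for k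
  proof -
    have "upper_set M (\<lambda>\<omega>. X \<omega> + Y \<omega>) ((a + c) + real k * \<delta>) \<subseteq> lev M Z (k - 1)"
    proof
      fix \<omega> assume \<omega>: "\<omega> \<in> upper_set M (\<lambda>\<omega>. X \<omega> + Y \<omega>) ((a + c) + real k * \<delta>)"
      then have sp: "\<omega> \<in> space M" and le: "(a + c) + real k * \<delta> \<le> X \<omega> + Y \<omega>" unfolding upper_set_def by auto
      have "X \<omega> < a + (real (nX \<omega>) + 1) * \<delta>" unfolding nX_def
        by (rule disc_upper[OF d]) (use ab[OF sp] Kb in auto)
      moreover have "Y \<omega> < c + (real (nY \<omega>) + 1) * \<delta>" unfolding nY_def
        by (rule disc_upper[OF d]) (use ce[OF sp] Kb in auto)
      ultimately have "real k * \<delta> < (real (nX \<omega> + nY \<omega>) + 2) * \<delta>" using le by (simp add: algebra_simps)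
      then have "real k < real (nX \<omega> + nY \<omega>) + 2" using d by simp
      then have "k - 1 \<le> Z \<omega>" unfolding Z_def by linarith
      then show "\<omega> \<in> lev M Z (k - 1)" using sp unfolding lev_def by auto
    qed
    moreover have "upper_set M (\<lambda>\<omega>. X \<omega> + Y \<omega>) ((a + c) + real k * \<delta>) \<in> sets M"
      using Sm by (rule upper_set_sets)
    ultimately show ?thesis unfolding gS_def using cap_mono[OF cap _ lZ] by blast
  qed
  have sS: "(\<Sum>k<2 * K. gS ((a + c) + real k * \<delta>)) \<le> 2 + JJ M v (2 * K) Z"
  proof -
    have "(\<Sum>k<2 * K. gS ((a + c) + real k * \<delta>)) \<le> (\<Sum>k<2 * K. v (lev M Z (k - 1)))"
      by (rule sum_mono) (rule gS_le)
    also have "\<dots> \<le> 2 + (\<Sum>k\<in>{1..2 * K}. v (lev M Z k))"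
      by (rule shift_sum_bound) (use cap_nonneg[OF cap lZ] cap_space[OF cap] in auto)
    finally show ?thesis unfolding JJ_def .
  qed
  have JZ: "JJ M v (2 * K) Z \<le> (\<Sum>k\<in>{1..K}. gX (a + real k * \<delta>)) + (\<Sum>k\<in>{1..K}. gY (c + real k * \<delta>))"
  proof -
    have "JJ M v (2 * K) Z = JJ M v (2 * K) (\<lambda>\<omega>. nX \<omega> + (\<Sum>k\<in>{1..K}. of_bool (\<omega> \<in> lev M nY k)))"
    proof (unfold Z_def, rule JJ_cong)
      fix \<omega> assume sp: "\<omega> \<in> space M"
      have "nY \<omega> = (\<Sum>k\<in>{1..K}. of_bool (k \<le> nY \<omega>))" unfolding nY_def by (rule disc_sum)
      also have "\<dots> = (\<Sum>k\<in>{1..K}. of_bool (\<omega> \<in> lev M nY k))"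
        using sp by (intro sum.cong) (auto simp: lev_def)
      finally show "nX \<omega> + nY \<omega> = nX \<omega> + (\<Sum>k\<in>{1..K}. of_bool (\<omega> \<in> lev M nY k))" by simp
    qed
    also have "\<dots> \<le> JJ M v (2 * K) nX + (\<Sum>k\<in>{1..K}. v (lev M nY k))"
      using JJ_add_sum[OF v lX, of "{1..K}" "lev M nY" "2 * K"] lY by auto
    also have "JJ M v (2 * K) nX \<le> (\<Sum>k\<in>{1..K}. gX (a + real k * \<delta>))"
      unfolding nX_def gX_def by (rule JJ_disc[OF v d Xm])
    also have "(\<Sum>k\<in>{1..K}. v (lev M nY k)) = (\<Sum>k\<in>{1..K}. gY (c + real k * \<delta>))"
      unfolding nY_def gY_def by (rule sum.cong) (auto simp: lev_disc[OF d])
    finally show ?thesis by simp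
  qed
  have "choquet M v (\<lambda>\<omega>. X \<omega> + Y \<omega>) \<le> (a + c) + \<delta> * (2 + JJ M v (2 * K) Z)"
    using nS rS sS d by (smt (verit) mult_left_mono)
  also have "\<dots> \<le> (a + c) + \<delta> * (2 + (\<Sum>k\<in>{1..K}. gX (a + real k * \<delta>)) + (\<Sum>k\<in>{1..K}. gY (c + real k * \<delta>)))"
    using JZ d by (simp add: mult_left_mono)
  also have "\<dots> \<le> choquet M v X + choquet M v Y + 2 * \<delta>"
    using nX nY rX rY by (simp add: distrib_left)
  finally show ?thesis .
qed

lemma choquet_subadd:
  assumes v: "submodular_capacity M v" and X: "X \<in> bdd_meas M" and Y: "Y \<in> bdd_meas M"
  shows "choquet M v (\<lambda>\<omega>. X \<omega> + Y \<omega>) \<le> choquet M v X + choquet M v Y"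
proof (rule field_le_epsilon)
  fix e :: real assume "0 < e"
  then show "choquet M v (\<lambda>\<omega>. X \<omega> + Y \<omega>) \<le> choquet M v X + choquet M v Y + e"
    using choquet_subadd_eps[OF v X Y, of "e / 2"] by simp
qed

definition dist_cap :: "real \<Rightarrow> ('a set \<Rightarrow> real) \<Rightarrow> 'a set \<Rightarrow> real" where
  "dist_cap \<alpha> w A = min (w A / \<alpha>) 1"

lemma dist_cap_cap: "capacity M w \<Longrightarrow> 0 < \<alpha> \<Longrightarrow> \<alpha> \<le> 1 \<Longrightarrow> capacity M (dist_cap \<alpha> w)"
  unfolding capacity_def dist_cap_def by (auto simp: divide_right_mono min.coboundedI1)

lemma dist_cap_submod:
  assumes w: "submodular_capacity M w" and a: "0 < \<alpha>" "\<alpha> \<le> 1"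
  shows "submodular_capacity M (dist_cap \<alpha> w)"
proof -
  have cw: "capacity M w" using w unfolding submodular_capacity_def by auto
  have "dist_cap \<alpha> w (A \<union> B) + dist_cap \<alpha> w (A \<inter> B) \<le> dist_cap \<alpha> w A + dist_cap \<alpha> w B"
    if A: "A \<in> sets M" and B: "B \<in> sets M" for A B
  proof -
    have sm: "w (A \<union> B) + w (A \<inter> B) \<le> w A + w B" using w A B unfolding submodular_capacity_def by auto
    have m1: "w (A \<inter> B) \<le> w A" "w (A \<inter> B) \<le> w B" "w A \<le> w (A \<union> B)" "w B \<le> w (A \<union> B)"
      using cap_mono[OF cw] A B by auto
    have "0 \<le> w (A \<inter> B)" using cap_nonneg[OF cw] A B by auto
    have e: "dist_cap \<alpha> w C = min (w C) \<alpha> / \<alpha>" for C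
      unfolding dist_cap_def using a by (auto simp: min_def field_simps)
    have "min (w (A \<union> B)) \<alpha> + min (w (A \<inter> B)) \<alpha> \<le> min (w A) \<alpha> + min (w B) \<alpha>"
      using sm m1 by (auto simp: min_def)
    then show ?thesis unfolding e using a by (simp add: add_divide_distrib[symmetric] divide_right_mono)
  qed
  then show ?thesis using dist_cap_cap[OF cw a] unfolding submodular_capacity_def by auto
qed

lemma VaR_facts:
  assumes cap: "capacity M w" and Xm: "X \<in> borel_measurable M"
    and ab: "\<And>\<omega>. \<omega> \<in> space M \<Longrightarrow> a \<le> X \<omega> \<and> X \<omega> \<le> b"
    and t: "0 \<le> t" "t < 1"
  shows "a \<le> VaR M w t X" "VaR M w t X \<le> b + 1"
    "\<And>x. a \<le> x \<Longrightarrow> x < VaR M w t X \<Longrightarrow> x \<le> b \<and> t < w (upper_set M X x)"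
    "\<And>x. t < w (upper_set M X x) \<Longrightarrow> x \<le> VaR M w t X"
proof -
  define L where "L = {x. w (upper_set M X x) \<le> t}"
  have V: "VaR M w t X = Inf L" unfolding VaR_def L_def ..
  have hi: "x \<in> L" if "b < x" for x
    using upper_set_high[of M X x] ab that cap_empty[OF cap] t unfolding L_def by force
  have lo: "a < x" if "x \<in> L" for x
  proof (rule ccontr)
    assume "\<not> a < x"
    then have "upper_set M X x = space M" using upper_set_low[of M x X] ab by force
    then show False using that cap_space[OF cap] t unfolding L_def by auto
  qed
  have ne: "L \<noteq> {}" using hi[of "b+1"] by auto
  have bb: "bdd_below L" using lo by (meson bdd_belowI less_imp_le)
  show "a \<le> VaR M w t X" unfolding V by (rule cInf_greatest[OF ne]) (use lo in force)
  show "VaR M w t X \<le> b + 1" unfolding V by (rule cInf_lower[OF hi bb]) simp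
  show "x \<le> b \<and> t < w (upper_set M X x)" if "a \<le> x" "x < VaR M w t X" for x
  proof -
    have "x \<notin> L" using cInf_lower[OF _ bb, of x] that V by force
    moreover have "x \<le> b" using hi[of x] \<open>x \<notin> L\<close> by force
    ultimately show ?thesis unfolding L_def by auto
  qed
  show "x \<le> VaR M w t X" if "t < w (upper_set M X x)" for x
  proof (rule ccontr)
    assume "\<not> x \<le> VaR M w t X"
    then have "Inf L < x" using V by simp
    then obtain y where y: "y \<in> L" "y < x" using cInf_lessD[OF ne] by blast
    have "w (upper_set M X x) \<le> w (upper_set M X y)" using g_anti[OF cap Xm] y(2) by simp
    then show False using y(1) that unfolding L_def by auto
  qed
qed

lemma VaR_anti:
  assumes cap: "capacity M w" and Xm: "X \<in> borel_measurable M"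
    and ab: "\<And>\<omega>. \<omega> \<in> space M \<Longrightarrow> a \<le> X \<omega> \<and> X \<omega> \<le> b"
    and t: "0 \<le> t" "t \<le> t'" "t' < 1"
  shows "VaR M w t' X \<le> VaR M w t X"
proof -
  define L where "L = (\<lambda>t. {x. w (upper_set M X x) \<le> t})"
  have hi: "x \<in> L s" if "b < x" "0 \<le> s" for x s
    using upper_set_high[of M X x] ab that cap_empty[OF cap] unfolding L_def by force
  have lo: "a < x" if "x \<in> L s" "s < 1" for x s
  proof (rule ccontr)
    assume "\<not> a < x"
    then have "upper_set M X x = space M" using upper_set_low[of M x X] ab by force
    then show False using that cap_space[OF cap] unfolding L_def by auto
  qed
  have "Inf (L t') \<le> Inf (L t)"
  proof (rule cInf_superset_mono)
    show "L t \<noteq> {}" using hi[of "b+1" t] t by auto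
    show "bdd_below (L t')" using lo[of _ t'] t by (meson bdd_belowI less_imp_le)
    show "L t \<subseteq> L t'" using t unfolding L_def by auto
  qed
  then show ?thesis unfolding VaR_def L_def .
qed

lemma ES_choquet:
  assumes cap: "capacity M w" and al: "0 < \<alpha>" "\<alpha> \<le> 1" and X: "X \<in> bdd_meas M"
  shows "ES M w \<alpha> X = choquet M (dist_cap \<alpha> w) X"
proof -
  obtain a b where ab: "\<And>\<omega>. \<omega> \<in> space M \<Longrightarrow> a \<le> X \<omega> \<and> X \<omega> \<le> b" using bdd_meas_bounds[OF X] by blast
  have Xm: "X \<in> borel_measurable M" using X bdd_measD by auto
  obtain \<omega>0 where "\<omega>0 \<in> space M" using cap_space_ne[OF cap] by blast
  then have ab': "a \<le> b" using ab by force
  define g where "g = (\<lambda>x. w (upper_set M X x))"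
  have gm[measurable]: "g \<in> borel_measurable borel" unfolding g_def by (rule g_meas[OF cap Xm])
  have gml[measurable]: "g \<in> borel_measurable lborel" using gm by simp
  have g01: "0 \<le> g x" "g x \<le> 1" for x
    unfolding g_def using cap_nonneg[OF cap] cap_le1[OF cap] upper_set_sets[OF Xm] by auto
  define V where "V = (\<lambda>t. VaR M w t X)"
  define Q where "Q = (\<lambda>t. indicator {0..<\<alpha>} t * (V t - a))"
  define P where "P = (\<lambda>x. indicator {a..b} x * min (g x) \<alpha>)"
  define R where "R = {p \<in> space (lborel \<Otimes>\<^sub>M lborel). 0 \<le> fst p \<and> fst p < \<alpha> \<and> a \<le> snd p \<and> snd p \<le> b \<and> fst p < g (snd p)}"
  have Rm: "R \<in> sets (lborel \<Otimes>\<^sub>M lborel)" unfolding R_def by measurable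
  have R_alt: "R = {p. 0 \<le> fst p \<and> fst p < \<alpha> \<and> a \<le> snd p \<and> snd p \<le> b \<and> fst p < g (snd p)}"
    unfolding R_def by (simp add: space_pair_measure)
  define F :: "real \<Rightarrow> real \<Rightarrow> ennreal" where "F = (\<lambda>t x. indicator R (t, x))"
  have Fm: "case_prod F \<in> borel_measurable (lborel \<Otimes>\<^sub>M lborel)"
  proof -
    have "case_prod F = indicator R" unfolding F_def by (auto simp: fun_eq_iff)
    then show ?thesis using Rm by simp
  qed
  have inner1: "(\<integral>\<^sup>+ t. F t x \<partial>lborel) = ennreal (P x)" for x
  proof (cases "a \<le> x \<and> x \<le> b")
    case True
    have "(\<lambda>t. F t x) = indicator {0..<min (g x) \<alpha>}"
      unfolding F_def R_alt using True by (auto simp: fun_eq_iff indicator_def)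
    then show ?thesis unfolding P_def using True g01[of x] al by simp
  next
    case False
    have "(\<lambda>t. F t x) = (\<lambda>t. 0)"
      unfolding F_def R_alt using False by (auto simp: fun_eq_iff indicator_def)
    then show ?thesis unfolding P_def using False by simp
  qed
  have inner2: "(\<integral>\<^sup>+ x. F t x \<partial>lborel) = ennreal (Q t)" for t
  proof (cases "0 \<le> t \<and> t < \<alpha>")
    case True
    then have t: "0 \<le> t" "t < 1" using al by auto
    define S where "S = {x. a \<le> x \<and> x \<le> b \<and> t < g x}"
    have Sm: "S \<in> sets lborel" unfolding S_def by measurable
    have "(\<lambda>x. F t x) = indicator S"
      unfolding F_def R_alt S_def using True by (auto simp: fun_eq_iff indicator_def)
    then have e: "(\<integral>\<^sup>+ x. F t x \<partial>lborel) = emeasure lborel S" using Sm by simp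
    note vf = VaR_facts[OF cap Xm ab t]
    have s1: "{a..<V t} \<subseteq> S" unfolding S_def V_def g_def using vf(3) by auto
    have s2: "S \<subseteq> {a..V t}" unfolding S_def V_def g_def using vf(4) by auto
    have aV: "a \<le> V t" unfolding V_def by (rule vf(1))
    have "emeasure lborel {a..<V t} \<le> emeasure lborel S" using s1 Sm by (rule emeasure_mono)
    moreover have "emeasure lborel S \<le> emeasure lborel {a..V t}" using s2 by (rule emeasure_mono) simp
    ultimately have "emeasure lborel S = ennreal (V t - a)" using aV by (simp add: antisym)
    then show ?thesis using e True unfolding Q_def by simp
  next
    case False
    have "(\<lambda>x. F t x) = (\<lambda>x. 0)"
      unfolding F_def R_alt using False by (auto simp: fun_eq_iff indicator_def)
    then show ?thesis unfolding Q_def using False by simp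
  qed
  have fub: "(\<integral>\<^sup>+ x. ennreal (P x) \<partial>lborel) = (\<integral>\<^sup>+ t. ennreal (Q t) \<partial>lborel)"
    using lborel_pair.Fubini'[OF Fm] unfolding inner1 inner2 .
  have Pm: "P \<in> borel_measurable lborel" unfolding P_def by measurable
  have Qm: "Q \<in> borel_measurable lborel"
  proof -
    have "(\<lambda>t. a - V t) \<in> borel_measurable (restrict_space borel {0..<\<alpha>})"
    proof (rule borel_measurable_mono_on_fnc)
      show "mono_on {0..<\<alpha>} (\<lambda>t. a - V t)"
        unfolding mono_on_def V_def using VaR_anti[OF cap Xm ab] al by fastforce
    qed
    then have "(\<lambda>t. - (a - V t)) \<in> borel_measurable (restrict_space borel {0..<\<alpha>})" by measurable
    then have "(\<lambda>t. V t - a) \<in> borel_measurable (restrict_space borel {0..<\<alpha>})" by simp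
    then have "(\<lambda>t. indicator {0..<\<alpha>} t *\<^sub>R (V t - a)) \<in> borel_measurable borel"
      by (subst (asm) borel_measurable_restrict_space_iff) auto
    then show ?thesis unfolding Q_def by simp
  qed
  have Pnn: "0 \<le> P x" for x unfolding P_def using g01 al by (simp add: indicator_def)
  have Qnn: "0 \<le> Q t" for t
  proof (cases "0 \<le> t \<and> t < \<alpha>")
    case True
    then show ?thesis unfolding Q_def V_def using VaR_facts(1)[OF cap Xm ab, of t] al by simp
  qed (auto simp: Q_def)
  have iPQ: "integral\<^sup>L lborel P = integral\<^sup>L lborel Q"
  proof -
    have "integral\<^sup>L lborel P = enn2real (\<integral>\<^sup>+ x. ennreal (P x) \<partial>lborel)"
      by (rule enn2real_nn_integral_eq_integral[symmetric]) (use Pm Pnn in auto)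
    also have "\<dots> = enn2real (\<integral>\<^sup>+ x. ennreal (Q x) \<partial>lborel)" by (simp add: fub)
    also have "\<dots> = integral\<^sup>L lborel Q"
      by (rule enn2real_nn_integral_eq_integral) (use Qm Qnn in auto)
    finally show ?thesis .
  qed
  have iP: "integral\<^sup>L lborel P = integral {a..b} (\<lambda>x. min (g x) \<alpha>)"
  proof -
    have "integral\<^sup>L lborel P = (LBINT x:{a..b}. min (g x) \<alpha>)"
      unfolding P_def set_lebesgue_integral_def by simp
    also have "\<dots> = integral {a..b} (\<lambda>x. min (g x) \<alpha>)"
      by (rule set_borel_integral_eq_integral(2), rule set_int_bounded_interval[where B=1])
        (use g01 al in \<open>auto\<close>)
    finally show ?thesis .
  qed
  have Qint: "integrable lborel Q"
  proof (rule integrableI_bounded_set[where A="{0..<\<alpha>}" and B="b + 1 - a"])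
    show "AE x in lborel. x \<in> {0..<\<alpha>} \<longrightarrow> norm (Q x) \<le> b + 1 - a"
    proof (rule AE_I2, intro impI)
      fix t :: real assume "t \<in> {0..<\<alpha>}"
      then have t: "0 \<le> t" "t < 1" using al by auto
      then show "norm (Q t) \<le> b + 1 - a" unfolding Q_def V_def
        using VaR_facts(1,2)[OF cap Xm ab t] \<open>t \<in> {0..<\<alpha>}\<close> by simp
    qed
  qed (use Qm less_imp_le[OF al(1)] in \<open>auto simp: Q_def\<close>)
  have iV: "(LBINT t:{0..\<alpha>}. V t) = integral\<^sup>L lborel Q + \<alpha> * a"
  proof -
    have eqf: "(\<lambda>t. indicator {0..\<alpha>} t *\<^sub>R V t) =
        (\<lambda>t. Q t + (indicator {0..<\<alpha>} t * a + indicator {\<alpha>} t * V \<alpha>))"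
      unfolding Q_def using al by (auto simp: fun_eq_iff indicator_def)
    have i1: "integrable lborel (\<lambda>t. indicator {0..<\<alpha>} t * a)"
      using al by (intro integrable_mult_left) (simp add: integrable_indicator_iff)
    have i2: "integrable lborel (\<lambda>t. indicator {\<alpha>} t * V \<alpha>)"
      by (intro integrable_mult_left) (simp add: integrable_indicator_iff)
    have "(LBINT t:{0..\<alpha>}. V t) = integral\<^sup>L lborel Q + (integral\<^sup>L lborel (\<lambda>t. indicator {0..<\<alpha>} t * a)
         + integral\<^sup>L lborel (\<lambda>t. indicator {\<alpha>} t * V \<alpha>))"
      unfolding set_lebesgue_integral_def eqf using Qint i1 i2 by simp
    also have "integral\<^sup>L lborel (\<lambda>t. indicator {0..<\<alpha>} t * a) = \<alpha> * a" using al by simp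
    also have "integral\<^sup>L lborel (\<lambda>t. indicator {\<alpha>} t * V \<alpha>) = 0" by simp
    finally show ?thesis by simp
  qed
  have nf: "choquet M (dist_cap \<alpha> w) X = a + integral {a..b} (\<lambda>x. dist_cap \<alpha> w (upper_set M X x))"
    by (rule choquet_nf[OF dist_cap_cap[OF cap al] Xm ab])
  have dc: "(\<lambda>x. dist_cap \<alpha> w (upper_set M X x)) = (\<lambda>x. (1 / \<alpha>) *\<^sub>R min (g x) \<alpha>)"
    unfolding dist_cap_def g_def using al by (auto simp: fun_eq_iff min_def field_simps)
  have "ES M w \<alpha> X = (1 / \<alpha>) * (integral {a..b} (\<lambda>x. min (g x) \<alpha>) + \<alpha> * a)"
    unfolding ES_def V_def[symmetric] iV iPQ[symmetric] iP ..
  also have "\<dots> = a + (1 / \<alpha>) * integral {a..b} (\<lambda>x. min (g x) \<alpha>)"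
    using al by (simp add: field_simps)
  also have "\<dots> = choquet M (dist_cap \<alpha> w) X"
    unfolding nf dc integral_cmul by simp
  finally show ?thesis .
qed

definition hb_adm :: "('a \<Rightarrow> real) set \<Rightarrow> (('a \<Rightarrow> real) \<Rightarrow> real) \<Rightarrow> ('a \<Rightarrow> real) \<Rightarrow> (('a \<Rightarrow> real) \<times> real) set \<Rightarrow> bool" where
  "hb_adm V p x0 G \<longleftrightarrow> (\<forall>(x,r)\<in>G. x \<in> V \<and> r \<le> p x)
     \<and> (\<forall>(x,r)\<in>G. \<forall>(y,s)\<in>G. ((\<lambda>\<omega>. x \<omega> + y \<omega>), r + s) \<in> G)
     \<and> (\<forall>(x,r)\<in>G. \<forall>c. ((\<lambda>\<omega>. c * x \<omega>), c * r) \<in> G)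
     \<and> (x0, p x0) \<in> G"

lemma hahn_banach_fun:
  fixes p :: "('a \<Rightarrow> real) \<Rightarrow> real" and V :: "('a \<Rightarrow> real) set"
  assumes Vadd: "\<And>x y. x \<in> V \<Longrightarrow> y \<in> V \<Longrightarrow> (\<lambda>\<omega>. x \<omega> + y \<omega>) \<in> V"
    and Vsc: "\<And>x c. x \<in> V \<Longrightarrow> (\<lambda>\<omega>. c * x \<omega>) \<in> V"
    and padd: "\<And>x y. x \<in> V \<Longrightarrow> y \<in> V \<Longrightarrow> p (\<lambda>\<omega>. x \<omega> + y \<omega>) \<le> p x + p y"
    and psc: "\<And>x c. x \<in> V \<Longrightarrow> 0 \<le> c \<Longrightarrow> p (\<lambda>\<omega>. c * x \<omega>) = c * p x"
    and x0: "x0 \<in> V"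
  shows "\<exists>f. (\<forall>x\<in>V. \<forall>y\<in>V. f (\<lambda>\<omega>. x \<omega> + y \<omega>) = f x + f y) \<and> (\<forall>x\<in>V. \<forall>c. f (\<lambda>\<omega>. c * x \<omega>) = c * f x)
           \<and> (\<forall>x\<in>V. f x \<le> p x) \<and> f x0 = p x0"
proof -
  have zV: "(\<lambda>\<omega>. 0) \<in> V" using Vsc[OF x0, of 0] by simp
  have p0: "p (\<lambda>\<omega>. 0) = 0" using psc[OF x0, of 0] by simp
  have Vlin: "(\<lambda>\<omega>. y \<omega> + t * z \<omega>) \<in> V" if "y \<in> V" "z \<in> V" for y z t
    using Vadd[OF that(1) Vsc[OF that(2)]] by simp
  have Vsub: "(\<lambda>\<omega>. y \<omega> - z \<omega>) \<in> V" if "y \<in> V" "z \<in> V" for y z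
    using Vlin[OF that, of "-1"] by simp
  have pneg: "c * p x \<le> p (\<lambda>\<omega>. c * x \<omega>)" if x: "x \<in> V" for x c
  proof (cases "0 \<le> c")
    case True then show ?thesis using psc[OF x True] by simp
  next
    case False
    have "p (\<lambda>\<omega>. c * x \<omega> + (- c) * x \<omega>) \<le> p (\<lambda>\<omega>. c * x \<omega>) + p (\<lambda>\<omega>. (- c) * x \<omega>)"
      by (rule padd) (use Vsc[OF x, of c] Vsc[OF x, of "-c"] in auto)
    moreover have "(\<lambda>\<omega>. c * x \<omega> + (- c) * x \<omega>) = (\<lambda>\<omega>. 0)" by auto
    moreover have "p (\<lambda>\<omega>. (- c) * x \<omega>) = - c * p x" using psc[OF x, of "-c"] False by simp
    ultimately show ?thesis using p0 by simp
  qed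
  define A where "A = {G. hb_adm V p x0 G}"
  define G0 where "G0 = {((\<lambda>\<omega>. c * x0 \<omega>), c * p x0) | c. True}"
  have G0A: "G0 \<in> A"
    unfolding A_def hb_adm_def
  proof (intro CollectI conjI)
    show "\<forall>(x, r)\<in>G0. x \<in> V \<and> r \<le> p x" unfolding G0_def using Vsc[OF x0] pneg[OF x0] by auto
    have mem: "((\<lambda>\<omega>. e * x0 \<omega>), e * p x0) \<in> G0" for e unfolding G0_def by blast
    show "\<forall>(x, r)\<in>G0. \<forall>(y, s)\<in>G0. (\<lambda>\<omega>. x \<omega> + y \<omega>, r + s) \<in> G0"
    proof (clarify)
      fix x r y s assume "(x, r) \<in> G0" "(y, s) \<in> G0"
      then obtain c d where cd: "x = (\<lambda>\<omega>. c * x0 \<omega>)" "r = c * p x0" "y = (\<lambda>\<omega>. d * x0 \<omega>)" "s = d * p x0"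
        unfolding G0_def by blast
      then have "(\<lambda>\<omega>. x \<omega> + y \<omega>) = (\<lambda>\<omega>. (c + d) * x0 \<omega>)" "r + s = (c + d) * p x0"
        by (auto simp: algebra_simps)
      then show "(\<lambda>\<omega>. x \<omega> + y \<omega>, r + s) \<in> G0" using mem[of "c + d"] by metis
    qed
    show "\<forall>(x, r)\<in>G0. \<forall>c. (\<lambda>\<omega>. c * x \<omega>, c * r) \<in> G0"
    proof (clarify)
      fix x r c' assume "(x, r) \<in> G0"
      then obtain c where cd: "x = (\<lambda>\<omega>. c * x0 \<omega>)" "r = c * p x0"
        unfolding G0_def by blast
      then have "(\<lambda>\<omega>. c' * x \<omega>) = (\<lambda>\<omega>. (c' * c) * x0 \<omega>)" "c' * r = (c' * c) * p x0"
        by (auto simp: algebra_simps)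
      then show "(\<lambda>\<omega>. c' * x \<omega>, c' * r) \<in> G0" using mem[of "c' * c"] by metis
    qed
    show "(x0, p x0) \<in> G0" unfolding G0_def by (auto intro!: exI[of _ 1])
  qed
  have chain: "\<Union>C \<in> A" if "C \<noteq> {}" "subset.chain A C" for C
  proof -
    have CA: "C \<subseteq> A" and lin: "\<And>X Y. X \<in> C \<Longrightarrow> Y \<in> C \<Longrightarrow> X \<subseteq> Y \<or> Y \<subseteq> X"
      using that unfolding subset_chain_def by auto
    have adm: "\<And>G. G \<in> C \<Longrightarrow> hb_adm V p x0 G" using CA unfolding A_def by auto
    show ?thesis unfolding A_def hb_adm_def
    proof (intro CollectI conjI)
      show "\<forall>(x, r)\<in>\<Union>C. x \<in> V \<and> r \<le> p x" using adm unfolding hb_adm_def by fast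
      show "\<forall>(x, r)\<in>\<Union>C. \<forall>(y, s)\<in>\<Union>C. (\<lambda>\<omega>. x \<omega> + y \<omega>, r + s) \<in> \<Union>C"
      proof (clarify)
        fix x r y s G1 G2 assume 1: "(x, r) \<in> G1" "G1 \<in> C" and 2: "(y, s) \<in> G2" "G2 \<in> C"
        show "(\<lambda>\<omega>. x \<omega> + y \<omega>, r + s) \<in> \<Union>C"
        proof (cases "G1 \<subseteq> G2")
          case True
          then show ?thesis using adm[OF 2(2)] 1 2 unfolding hb_adm_def by blast
        next
          case False
          then have "G2 \<subseteq> G1" using lin 1 2 by blast
          then show ?thesis using adm[OF 1(2)] 1 2 unfolding hb_adm_def by blast
        qed
      qed
      show "\<forall>(x, r)\<in>\<Union>C. \<forall>c. (\<lambda>\<omega>. c * x \<omega>, c * r) \<in> \<Union>C" using adm unfolding hb_adm_def by fast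
      show "(x0, p x0) \<in> \<Union>C" using adm \<open>C \<noteq> {}\<close> unfolding hb_adm_def by blast
    qed
  qed
  obtain Gm where GmA: "Gm \<in> A" and maxi: "\<And>X. X \<in> A \<Longrightarrow> Gm \<subseteq> X \<Longrightarrow> X = Gm"
    using subset_Zorn_nonempty[of A] G0A chain by blast
  have adm: "hb_adm V p x0 Gm" using GmA unfolding A_def by auto
  have G1: "\<And>x r. (x, r) \<in> Gm \<Longrightarrow> x \<in> V \<and> r \<le> p x"
    and G2: "\<And>x r y s. (x, r) \<in> Gm \<Longrightarrow> (y, s) \<in> Gm \<Longrightarrow> ((\<lambda>\<omega>. x \<omega> + y \<omega>), r + s) \<in> Gm"
    and G3: "\<And>x r c. (x, r) \<in> Gm \<Longrightarrow> ((\<lambda>\<omega>. c * x \<omega>), c * r) \<in> Gm"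
    and G4: "(x0, p x0) \<in> Gm"
    using adm unfolding hb_adm_def by auto
  have G0m: "((\<lambda>\<omega>. 0), 0) \<in> Gm" using G3[OF G4, of 0] by simp
  have uniq: "r = s" if "(x, r) \<in> Gm" "(x, s) \<in> Gm" for x r s
  proof -
    have le: "r' - s' \<le> 0" if "(x, r') \<in> Gm" "(x, s') \<in> Gm" for r' s'
    proof -
      have "((\<lambda>\<omega>. x \<omega> + (-1) * x \<omega>), r' + (-1) * s') \<in> Gm" by (rule G2[OF that(1) G3[OF that(2)]])
      moreover have "(\<lambda>\<omega>. x \<omega> + (-1) * x \<omega>) = (\<lambda>\<omega>. 0)" by auto
      ultimately have "r' - s' \<le> p (\<lambda>\<omega>. 0)" using G1 by fastforce
      then show ?thesis using p0 by simp
    qed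
    show ?thesis using le[OF that] le[OF that(2,1)] by simp
  qed
  have dom: "\<exists>r. (x, r) \<in> Gm" if x: "x \<in> V" for x
  proof (rule ccontr)
    assume nz: "\<nexists>r. (x, r) \<in> Gm"
    define z where "z = x"
    have zV: "z \<in> V" using x z_def by simp
    define S where "S = {r - p (\<lambda>\<omega>. y \<omega> + (-1) * z \<omega>) | y r. (y, r) \<in> Gm}"
    have key: "r - p (\<lambda>\<omega>. y \<omega> + (-1) * z \<omega>) \<le> p (\<lambda>\<omega>. y' \<omega> + z \<omega>) - s"
      if "(y, r) \<in> Gm" "(y', s) \<in> Gm" for y r y' s
    proof -
      have yV: "y \<in> V" "y' \<in> V" using G1 that by auto
      have "r + s \<le> p (\<lambda>\<omega>. y \<omega> + y' \<omega>)" using G1[OF G2[OF that]] by simp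
      also have "(\<lambda>\<omega>. y \<omega> + y' \<omega>) = (\<lambda>\<omega>. (y \<omega> + (-1) * z \<omega>) + (y' \<omega> + z \<omega>))" by auto
      also have "p \<dots> \<le> p (\<lambda>\<omega>. y \<omega> + (-1) * z \<omega>) + p (\<lambda>\<omega>. y' \<omega> + z \<omega>)"
        by (rule padd) (use yV zV Vadd Vsc Vlin Vsub in auto)
      finally show ?thesis by simp
    qed
    have Sne: "S \<noteq> {}" using G4 unfolding S_def by blast
    have Sbdd: "bdd_above S" unfolding S_def using key[OF _ G4] by (auto intro!: bdd_aboveI)
    define r0 where "r0 = Sup S"
    have up: "r - p (\<lambda>\<omega>. y \<omega> + (-1) * z \<omega>) \<le> r0" if "(y, r) \<in> Gm" for y r
      unfolding r0_def by (rule cSup_upper[OF _ Sbdd]) (use that S_def in blast)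
    have lo: "r0 \<le> p (\<lambda>\<omega>. y \<omega> + z \<omega>) - s" if "(y, s) \<in> Gm" for y s
      unfolding r0_def by (rule cSup_least[OF Sne]) (use key[OF _ that] S_def in blast)
    define G' where "G' = {((\<lambda>\<omega>. y \<omega> + t * z \<omega>), r + t * r0) | y r t. (y, r) \<in> Gm}"
    have sub: "Gm \<subseteq> G'"
    proof
      fix q assume "q \<in> Gm"
      then obtain y r where q: "q = (y, r)" "(y, r) \<in> Gm" by (cases q) auto
      have "(y, r) = ((\<lambda>\<omega>. y \<omega> + 0 * z \<omega>), r + 0 * r0)" by simp
      then show "q \<in> G'" unfolding G'_def using q by blast
    qed
    have zin: "(z, r0) \<in> G'" unfolding G'_def
      apply (rule CollectI, rule exI[where x="\<lambda>\<omega>. 0"], rule exI[where x="0::real"], rule exI[where x="1::real"])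
      using G0m by simp
    have G'A: "G' \<in> A" unfolding A_def hb_adm_def
    proof (intro CollectI conjI)
      show "\<forall>(x, r)\<in>G'. x \<in> V \<and> r \<le> p x"
      proof (clarsimp simp: G'_def)
        fix y r t assume yr: "(y, r) \<in> Gm"
        have yV: "y \<in> V" using G1[OF yr] by simp
        show "(\<lambda>\<omega>. y \<omega> + t * z \<omega>) \<in> V \<and> r + t * r0 \<le> p (\<lambda>\<omega>. y \<omega> + t * z \<omega>)"
        proof
          show "(\<lambda>\<omega>. y \<omega> + t * z \<omega>) \<in> V" using Vadd Vsc yV zV by auto
          consider "t = 0" | "0 < t" | "t < 0" by linarith
          then show "r + t * r0 \<le> p (\<lambda>\<omega>. y \<omega> + t * z \<omega>)"
          proof cases
            case 1 then show ?thesis using G1[OF yr] by simp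
          next
            case 2
            have yr': "((\<lambda>\<omega>. (1/t) * y \<omega>), (1/t) * r) \<in> Gm" by (rule G3[OF yr])
            have "r0 \<le> p (\<lambda>\<omega>. (1/t) * y \<omega> + z \<omega>) - (1/t) * r" by (rule lo[OF yr'])
            then have "t * r0 + r \<le> t * p (\<lambda>\<omega>. (1/t) * y \<omega> + z \<omega>)" using 2 by (simp add: field_simps)
            also have "t * p (\<lambda>\<omega>. (1/t) * y \<omega> + z \<omega>) = p (\<lambda>\<omega>. t * ((1/t) * y \<omega> + z \<omega>))"
              by (rule psc[symmetric, OF Vadd[OF Vsc[OF yV] zV]]) (use 2 in simp)
            also have "(\<lambda>\<omega>. t * ((1/t) * y \<omega> + z \<omega>)) = (\<lambda>\<omega>. y \<omega> + t * z \<omega>)"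
              using 2 by (auto simp: fun_eq_iff field_simps)
            finally show ?thesis by simp
          next
            case 3
            define s where "s = - t"
            have s: "0 < s" using 3 s_def by simp
            have yr': "((\<lambda>\<omega>. (1/s) * y \<omega>), (1/s) * r) \<in> Gm" by (rule G3[OF yr])
            have "(1/s) * r - p (\<lambda>\<omega>. (1/s) * y \<omega> + (-1) * z \<omega>) \<le> r0" by (rule up[OF yr'])
            then have "r - s * r0 \<le> s * p (\<lambda>\<omega>. (1/s) * y \<omega> + (-1) * z \<omega>)" using s by (simp add: field_simps)
            also have "s * p (\<lambda>\<omega>. (1/s) * y \<omega> + (-1) * z \<omega>) = p (\<lambda>\<omega>. s * ((1/s) * y \<omega> + (-1) * z \<omega>))"
              by (rule psc[symmetric, OF Vadd[OF Vsc[OF yV] Vsc[OF zV]]]) (use s in simp)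
            also have "(\<lambda>\<omega>. s * ((1/s) * y \<omega> + (-1) * z \<omega>)) = (\<lambda>\<omega>. y \<omega> + t * z \<omega>)"
              using s s_def by (auto simp: fun_eq_iff field_simps)
            finally show ?thesis using s_def by simp
          qed
        qed
      qed
      show "\<forall>(x, r)\<in>G'. \<forall>(y, s)\<in>G'. (\<lambda>\<omega>. x \<omega> + y \<omega>, r + s) \<in> G'"
      proof (clarsimp simp: G'_def)
        fix y r t y' r' t' assume 1: "(y, r) \<in> Gm" and 2: "(y', r') \<in> Gm"
        have "((\<lambda>\<omega>. y \<omega> + y' \<omega>), r + r') \<in> Gm" by (rule G2[OF 1 2])
        moreover have "(\<lambda>\<omega>. y \<omega> + t * z \<omega> + (y' \<omega> + t' * z \<omega>)) = (\<lambda>\<omega>. (y \<omega> + y' \<omega>) + (t + t') * z \<omega>)"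
          by (auto simp: fun_eq_iff algebra_simps)
        moreover have "r + t * r0 + (r' + t' * r0) = (r + r') + (t + t') * r0" by (simp add: algebra_simps)
        ultimately show "\<exists>ya ra. (\<exists>ta. (\<lambda>\<omega>. y \<omega> + t * z \<omega> + (y' \<omega> + t' * z \<omega>)) = (\<lambda>\<omega>. ya \<omega> + ta * z \<omega>) \<and>
                   r + t * r0 + (r' + t' * r0) = ra + ta * r0) \<and> (ya, ra) \<in> Gm"
          apply - apply (rule exI[where x="\<lambda>\<omega>. y \<omega> + y' \<omega>"], rule exI[where x="r + r'"], rule conjI, rule exI[where x="t + t'"])
          by auto
      qed
      show "\<forall>(x, r)\<in>G'. \<forall>c. (\<lambda>\<omega>. c * x \<omega>, c * r) \<in> G'"
      proof (clarsimp simp: G'_def)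
        fix y r t c assume 1: "(y, r) \<in> Gm"
        have "((\<lambda>\<omega>. c * y \<omega>), c * r) \<in> Gm" by (rule G3[OF 1])
        moreover have "(\<lambda>\<omega>. c * (y \<omega> + t * z \<omega>)) = (\<lambda>\<omega>. c * y \<omega> + (c * t) * z \<omega>)"
          by (auto simp: fun_eq_iff algebra_simps)
        moreover have "c * (r + t * r0) = c * r + (c * t) * r0" by (simp add: algebra_simps)
        ultimately show "\<exists>ya ra. (\<exists>ta. (\<lambda>\<omega>. c * (y \<omega> + t * z \<omega>)) = (\<lambda>\<omega>. ya \<omega> + ta * z \<omega>) \<and>
                   c * (r + t * r0) = ra + ta * r0) \<and> (ya, ra) \<in> Gm"
          apply - apply (rule exI[where x="\<lambda>\<omega>. c * y \<omega>"], rule exI[where x="c * r"], rule conjI, rule exI[where x="c * t"])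
          by auto
      qed
      show "(x0, p x0) \<in> G'" using sub G4 by blast
    qed
    have "G' = Gm" by (rule maxi[OF G'A sub])
    then have "(z, r0) \<in> Gm" using zin by simp
    then show False using nz z_def by blast
  qed
  define f where "f = (\<lambda>x. THE r. (x, r) \<in> Gm)"
  have fG: "(x, f x) \<in> Gm" if xV: "x \<in> V" for x
  proof -
    obtain r where r: "(x, r) \<in> Gm" using dom[OF xV] by blast
    have "f x = r" unfolding f_def by (rule the_equality) (use uniq r in blast)+
    then show ?thesis using r by simp
  qed
  have fval: "f x = r" if "(x, r) \<in> Gm" for x r
    unfolding f_def by (rule the_equality) (use uniq that in blast)+
  show ?thesis
  proof (intro exI[of _ f] conjI ballI allI)
    fix x y assume "x \<in> V" "y \<in> V"
    show "f (\<lambda>\<omega>. x \<omega> + y \<omega>) = f x + f y" by (rule fval, rule G2) (use fG \<open>x \<in> V\<close> \<open>y \<in> V\<close> in auto)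
  next
    fix x c assume "x \<in> V"
    show "f (\<lambda>\<omega>. c * x \<omega>) = c * f x" by (rule fval, rule G3) (use fG \<open>x \<in> V\<close> in auto)
  next
    fix x assume "x \<in> V"
    show "f x \<le> p x" using G1[OF fG[OF \<open>x \<in> V\<close>]] by simp
  next
    show "f x0 = p x0" by (rule fval[OF G4])
  qed
qed

lemma bdd_meas_sum: "finite F \<Longrightarrow> (\<And>j. j \<in> F \<Longrightarrow> Y j \<in> bdd_meas M) \<Longrightarrow> (\<lambda>\<omega>. \<Sum>j\<in>F. Y j \<omega>) \<in> bdd_meas M"
proof (induction F rule: finite_induct)
  case empty then show ?case using bdd_meas_const[of 0 M] by simp
next
  case (insert j F)
  then show ?case using bdd_meas_add[of "Y j" M "\<lambda>\<omega>. \<Sum>j\<in>F. Y j \<omega>"] by simp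
qed

lemma lin_sum:
  assumes fadd: "\<And>x y. x \<in> bdd_meas M \<Longrightarrow> y \<in> bdd_meas M \<Longrightarrow> f (\<lambda>\<omega>. x \<omega> + y \<omega>) = f x + f y"
    and fsc: "\<And>x c. x \<in> bdd_meas M \<Longrightarrow> f (\<lambda>\<omega>. c * x \<omega>) = c * f x"
  shows "finite F \<Longrightarrow> (\<And>j. j \<in> F \<Longrightarrow> Y j \<in> bdd_meas M) \<Longrightarrow> f (\<lambda>\<omega>. \<Sum>j\<in>F. Y j \<omega>) = (\<Sum>j\<in>F. f (Y j))"
proof (induction F rule: finite_induct)
  case empty then show ?case using fsc[OF bdd_meas_const[of 1 M], of 0] by simp
next
  case (insert j F)
  have "f (\<lambda>\<omega>. \<Sum>j\<in>insert j F. Y j \<omega>) = f (\<lambda>\<omega>. Y j \<omega> + (\<Sum>j\<in>F. Y j \<omega>))" using insert by simp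
  also have "\<dots> = f (\<lambda>\<omega>. Y j \<omega>) + f (\<lambda>\<omega>. \<Sum>j\<in>F. Y j \<omega>)"
    by (rule fadd) (use insert bdd_meas_sum[of F Y M] in auto)
  finally show ?case using insert by simp
qed

lemma lin_choquet:
  assumes fadd: "\<And>x y. x \<in> bdd_meas M \<Longrightarrow> y \<in> bdd_meas M \<Longrightarrow> f (\<lambda>\<omega>. x \<omega> + y \<omega>) = f x + f y"
    and fsc: "\<And>x c. x \<in> bdd_meas M \<Longrightarrow> f (\<lambda>\<omega>. c * x \<omega>) = c * f x"
    and fmono: "\<And>x y. x \<in> bdd_meas M \<Longrightarrow> y \<in> bdd_meas M \<Longrightarrow> (\<And>\<omega>. \<omega> \<in> space M \<Longrightarrow> x \<omega> \<le> y \<omega>) \<Longrightarrow> f x \<le> f y"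
    and f1: "f (\<lambda>\<omega>. 1) = 1"
    and cap: "capacity M (\<lambda>A. f (indicator A))"
    and X: "X \<in> bdd_meas M"
  shows "choquet M (\<lambda>A. f (indicator A)) X = f X"
proof -
  define P where "P = (\<lambda>A. f (indicator A))"
  have cap': "capacity M P" using cap unfolding P_def .
  obtain a b where ab: "\<And>\<omega>. \<omega> \<in> space M \<Longrightarrow> a \<le> X \<omega> \<and> X \<omega> \<le> b" using bdd_meas_bounds[OF X] by blast
  have Xm: "X \<in> borel_measurable M" using X bdd_measD by auto
  have fc: "f (\<lambda>\<omega>. c) = c" for c using fsc[OF bdd_meas_const[of 1 M], of c] f1 by simp
  have main: "\<bar>choquet M P X - f X\<bar> \<le> \<delta>" if d: "0 < \<delta>" for \<delta>
  proof -
    define K where "K = nat \<lceil>(b - a) / \<delta>\<rceil>"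
    have "(b - a) / \<delta> \<le> real K" unfolding K_def by linarith
    then have Kb: "b \<le> a + real K * \<delta>" using d by (simp add: field_simps)
    define g where "g = (\<lambda>x. P (upper_set M X x))"
    have nf: "choquet M P X = a + integral {a..a + real K * \<delta>} g"
      unfolding g_def by (rule choquet_nf[OF cap' Xm]) (use ab Kb in force)
    have anti: "\<And>x y. x \<le> y \<Longrightarrow> g y \<le> g x" unfolding g_def by (rule g_anti[OF cap' Xm])
    have g01: "0 \<le> g x" "g x \<le> 1" for x
      unfolding g_def using cap_nonneg[OF cap'] cap_le1[OF cap'] upper_set_sets[OF Xm] by auto
    note rb = riemann_bounds[where g=g and K=K and a=a, OF anti d]
    define S where "S = (\<Sum>k\<in>{1..K}. g (a + real k * \<delta>))"
    have "(\<Sum>k<K. g (a + real k * \<delta>)) \<le> (\<Sum>k\<in>insert 0 {1..K}. g (a + real k * \<delta>))"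
      by (rule sum_mono2) (use g01 in auto)
    also have "\<dots> \<le> 1 + S" unfolding S_def using g01[of a] by simp
    finally have up: "(\<Sum>k<K. g (a + real k * \<delta>)) \<le> 1 + S" .
    have c1: "a + \<delta> * S \<le> choquet M P X" using nf rb unfolding S_def by linarith
    have c2: "choquet M P X \<le> a + \<delta> * S + \<delta>"
      using nf rb mult_left_mono[OF up less_imp_le[OF d]] unfolding S_def by (simp add: distrib_left)
    define nX where "nX = disc X a \<delta> K"
    define Ind where "Ind = (\<lambda>\<omega>. \<Sum>k\<in>{1..K}. indicator (upper_set M X (a + real k * \<delta>)) \<omega> :: real)"
    define Xd where "Xd = (\<lambda>\<omega>. a + \<delta> * Ind \<omega>)"
    have Ind_b: "Ind \<in> bdd_meas M" unfolding Ind_def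
      by (rule bdd_meas_sum) (auto intro: bdd_meas_ind upper_set_sets[OF Xm])
    have Xd_b: "Xd \<in> bdd_meas M" unfolding Xd_def
      by (rule bdd_meas_add[OF bdd_meas_const bdd_meas_scale[OF Ind_b]])
    have Ind_eq: "Ind \<omega> = real (nX \<omega>)" if sp: "\<omega> \<in> space M" for \<omega>
    proof -
      have "Ind \<omega> = (\<Sum>k\<in>{1..K}. of_bool (k \<le> nX \<omega>) :: real)"
        unfolding Ind_def
      proof (rule sum.cong)
        fix k assume k: "k \<in> {1..K}"
        have "\<omega> \<in> upper_set M X (a + real k * \<delta>) \<longleftrightarrow> \<omega> \<in> lev M nX k"
          unfolding nX_def using lev_disc[OF d, of k K M X a] k by auto
        then show "indicator (upper_set M X (a + real k * \<delta>)) \<omega> = (of_bool (k \<le> nX \<omega>) :: real)"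
          using sp unfolding lev_def by (auto simp: indicator_def)
      qed simp
      also have "\<dots> = real (\<Sum>k\<in>{1..K}. of_bool (k \<le> nX \<omega>) :: nat)" by simp
      also have "(\<Sum>k\<in>{1..K}. of_bool (k \<le> nX \<omega>) :: nat) = nX \<omega>" unfolding nX_def by (rule disc_sum[symmetric])
      finally show ?thesis .
    qed
    have Xd_le: "Xd \<omega> \<le> X \<omega>" if sp: "\<omega> \<in> space M" for \<omega>
    proof -
      have "real (nX \<omega>) \<le> (X \<omega> - a) / \<delta>"
      proof -
        have "real (nX \<omega>) \<le> real (nat \<lfloor>(X \<omega> - a) / \<delta>\<rfloor>)" unfolding nX_def disc_def by simp
        also have "\<dots> = of_int \<lfloor>(X \<omega> - a) / \<delta>\<rfloor>" using ab[OF sp] d by simp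
        also have "\<dots> \<le> (X \<omega> - a) / \<delta>" by simp
        finally show ?thesis .
      qed
      then show ?thesis unfolding Xd_def Ind_eq[OF sp] using d by (simp add: field_simps)
    qed
    have Xd_ge: "X \<omega> \<le> Xd \<omega> + \<delta>" if sp: "\<omega> \<in> space M" for \<omega>
    proof -
      have "X \<omega> < a + (real (nX \<omega>) + 1) * \<delta>" unfolding nX_def
        by (rule disc_upper[OF d]) (use ab[OF sp] Kb in auto)
      then show ?thesis unfolding Xd_def Ind_eq[OF sp] by (simp add: algebra_simps)
    qed
    have fXd: "f Xd = a + \<delta> * S"
    proof -
      have "f Xd = f (\<lambda>\<omega>. a) + f (\<lambda>\<omega>. \<delta> * Ind \<omega>)" unfolding Xd_def
        by (rule fadd[OF bdd_meas_const bdd_meas_scale[OF Ind_b]])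
      also have "f (\<lambda>\<omega>. \<delta> * Ind \<omega>) = \<delta> * f Ind" by (rule fsc[OF Ind_b])
      also have "f Ind = (\<Sum>k\<in>{1..K}. f (indicator (upper_set M X (a + real k * \<delta>))))"
        unfolding Ind_def by (rule lin_sum[OF fadd fsc]) (auto intro: bdd_meas_ind upper_set_sets[OF Xm])
      also have "\<dots> = S" unfolding S_def g_def P_def ..
      finally show ?thesis using fc by simp
    qed
    have "f Xd \<le> f X" by (rule fmono[OF Xd_b X Xd_le])
    moreover have "f X \<le> f (\<lambda>\<omega>. Xd \<omega> + \<delta>)"
      by (rule fmono[OF X bdd_meas_add[OF Xd_b bdd_meas_const]]) (rule Xd_ge)
    moreover have "f (\<lambda>\<omega>. Xd \<omega> + \<delta>) = f Xd + \<delta>" using fadd[OF Xd_b bdd_meas_const, of \<delta>] fc by simp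
    ultimately show ?thesis using c1 c2 fXd by linarith
  qed
  have "choquet M P X = f X"
  proof (rule ccontr)
    assume "choquet M P X \<noteq> f X"
    then have pos: "0 < \<bar>choquet M P X - f X\<bar> / 2" by simp
    from main[OF pos] pos show False by (smt (verit) field_sum_of_halves)
  qed
  then show ?thesis unfolding P_def .
qed

lemma choquet_subadd_sum:
  assumes v: "submodular_capacity M v"
  shows "finite F \<Longrightarrow> (\<And>j. j \<in> F \<Longrightarrow> Y j \<in> bdd_meas M) \<Longrightarrow>
     choquet M v (\<lambda>\<omega>. \<Sum>j\<in>F. Y j \<omega>) \<le> (\<Sum>j\<in>F. choquet M v (Y j))"
proof (induction F rule: finite_induct)
  case empty then show ?case using choquet_const[OF submod_cap[OF v], of 0] by simp
next
  case (insert j F)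
  have "choquet M v (\<lambda>\<omega>. \<Sum>j\<in>insert j F. Y j \<omega>) = choquet M v (\<lambda>\<omega>. Y j \<omega> + (\<Sum>j\<in>F. Y j \<omega>))"
    using insert by simp
  also have "\<dots> \<le> choquet M v (\<lambda>\<omega>. Y j \<omega>) + choquet M v (\<lambda>\<omega>. \<Sum>j\<in>F. Y j \<omega>)"
    by (rule choquet_subadd[OF v]) (use insert bdd_meas_sum[of F Y M] in auto)
  finally show ?case using insert by simp
qed

locale icsetting =
  fixes M :: "'a measure" and n :: nat and \<alpha> :: "nat \<Rightarrow> real" and ws :: "nat \<Rightarrow> 'a set \<Rightarrow> real"
  assumes n1: "n \<ge> 1"
    and al: "\<And>i. i < n \<Longrightarrow> 0 < \<alpha> i \<and> \<alpha> i \<le> 1"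
    and wsub: "\<And>i. i < n \<Longrightarrow> submodular_capacity M (ws i)"
begin

definition E :: "nat \<Rightarrow> ('a \<Rightarrow> real) \<Rightarrow> real" where "E i = ES M (ws i) (\<alpha> i)"

definition SS :: "('a \<Rightarrow> real) \<Rightarrow> real set" where
  "SS X = {(\<Sum>i<n. E i (Y i)) | Y. (\<forall>i<n. Y i \<in> bdd_meas M) \<and> (\<forall>\<omega>\<in>space M. (\<Sum>i<n. Y i \<omega>) = X \<omega>)}"

lemma ic_eq: "inf_conv M n E X = (INF s\<in>SS X. ereal s)"
proof -
  have "{ereal (\<Sum>i<n. E i (Y i)) | Y. (\<forall>i<n. Y i \<in> bdd_meas M) \<and> (\<forall>\<omega>\<in>space M. (\<Sum>i<n. Y i \<omega>) = X \<omega>)}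
        = ereal ` SS X" unfolding SS_def by blast
  then show ?thesis unfolding inf_conv_def by simp
qed

lemma D_sub: "i < n \<Longrightarrow> submodular_capacity M (dist_cap (\<alpha> i) (ws i))"
  using dist_cap_submod[OF wsub] al by auto

lemma D_cap: "i < n \<Longrightarrow> capacity M (dist_cap (\<alpha> i) (ws i))"
  using D_sub submod_cap by blast

lemma E_ch: "i < n \<Longrightarrow> Y \<in> bdd_meas M \<Longrightarrow> E i Y = choquet M (dist_cap (\<alpha> i) (ws i)) Y"
  unfolding E_def using ES_choquet[OF submod_cap[OF wsub]] al by auto

lemma E_mono: "i < n \<Longrightarrow> Y \<in> bdd_meas M \<Longrightarrow> Y' \<in> bdd_meas M \<Longrightarrow> (\<And>\<omega>. \<omega> \<in> space M \<Longrightarrow> Y \<omega> \<le> Y' \<omega>) \<Longrightarrow> E i Y \<le> E i Y'"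
  using E_ch choquet_mono[OF D_cap D_cap] by simp

lemma E_subadd:
  assumes "i < n" "Y \<in> bdd_meas M" "Y' \<in> bdd_meas M"
  shows "E i (\<lambda>\<omega>. Y \<omega> + Y' \<omega>) \<le> E i Y + E i Y'"
  using E_ch[OF assms(1) bdd_meas_add[OF assms(2,3)]] E_ch[OF assms(1) assms(2)] E_ch[OF assms(1) assms(3)]
    choquet_subadd[OF D_sub[OF assms(1)] assms(2,3)] by simp

lemma E_scale:
  assumes "i < n" "Y \<in> bdd_meas M" "0 < c"
  shows "E i (\<lambda>\<omega>. c * Y \<omega>) = c * E i Y"
  using E_ch[OF assms(1) bdd_meas_scale[OF assms(2)]] E_ch[OF assms(1) assms(2)]
    choquet_scale[OF D_cap[OF assms(1)] assms(2,3)] by simp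

lemma E_const: "i < n \<Longrightarrow> E i (\<lambda>\<omega>. c) = c"
  using E_ch[OF _ bdd_meas_const] choquet_const[OF D_cap] by simp

lemma E_ind: "i < n \<Longrightarrow> A \<in> sets M \<Longrightarrow> E i (indicator A) = dist_cap (\<alpha> i) (ws i) A"
  using E_ch[OF _ bdd_meas_ind] choquet_ind[OF D_cap] by simp

lemma SS_cong: "(\<And>\<omega>. \<omega> \<in> space M \<Longrightarrow> X \<omega> = X' \<omega>) \<Longrightarrow> SS X = SS X'"
  unfolding SS_def by auto

lemma SS_triv:
  assumes j: "j < n" and X: "X \<in> bdd_meas M"
  shows "E j X \<in> SS X"
proof -
  define Y where "Y = (\<lambda>i. if i = j then X else (\<lambda>\<omega>. 0))"
  have 1: "\<forall>i<n. Y i \<in> bdd_meas M" unfolding Y_def using X bdd_meas_const by auto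
  have 2: "(\<Sum>i<n. Y i \<omega>) = X \<omega>" for \<omega>
  proof -
    have "(\<Sum>i<n. Y i \<omega>) = (\<Sum>i<n. if i = j then X \<omega> else 0)"
      by (rule sum.cong) (auto simp: Y_def)
    then show ?thesis using j by simp
  qed
  have 3: "(\<Sum>i<n. E i (Y i)) = E j X"
  proof -
    have "(\<Sum>i<n. E i (Y i)) = (\<Sum>i<n. if i = j then E j X else 0)"
      by (rule sum.cong) (auto simp: Y_def E_const)
    also have "\<dots> = E j X" using j by simp
    finally show ?thesis .
  qed
  show ?thesis unfolding SS_def using 1 2 3 by (intro CollectI exI[of _ Y]) auto
qed

lemma SS_ne: "X \<in> bdd_meas M \<Longrightarrow> SS X \<noteq> {}"
  using SS_triv[of 0 X] n1 by auto

lemma SS_add: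
  assumes s: "s \<in> SS X" and t: "t \<in> SS X'"
  shows "\<exists>u\<in>SS (\<lambda>\<omega>. X \<omega> + X' \<omega>). u \<le> s + t"
proof -
  obtain Y where Y: "\<forall>i<n. Y i \<in> bdd_meas M" "\<forall>\<omega>\<in>space M. (\<Sum>i<n. Y i \<omega>) = X \<omega>" "s = (\<Sum>i<n. E i (Y i))"
    using s unfolding SS_def by blast
  obtain Y' where Y': "\<forall>i<n. Y' i \<in> bdd_meas M" "\<forall>\<omega>\<in>space M. (\<Sum>i<n. Y' i \<omega>) = X' \<omega>" "t = (\<Sum>i<n. E i (Y' i))"
    using t unfolding SS_def by blast
  define Z where "Z = (\<lambda>i \<omega>. Y i \<omega> + Y' i \<omega>)"
  have "(\<Sum>i<n. E i (Z i)) \<in> SS (\<lambda>\<omega>. X \<omega> + X' \<omega>)"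
    unfolding SS_def Z_def using Y Y' by (intro CollectI exI[of _ Z]) (auto simp: Z_def sum.distrib bdd_meas_add)
  moreover have "(\<Sum>i<n. E i (Z i)) \<le> s + t"
    unfolding Y(3) Y'(3) sum.distrib[symmetric] Z_def by (rule sum_mono) (use Y(1) Y'(1) E_subadd in auto)
  ultimately show ?thesis by blast
qed

lemma SS_scale:
  assumes s: "s \<in> SS X" and c: "0 < c"
  shows "c * s \<in> SS (\<lambda>\<omega>. c * X \<omega>)"
proof -
  obtain Y where Y: "\<forall>i<n. Y i \<in> bdd_meas M" "\<forall>\<omega>\<in>space M. (\<Sum>i<n. Y i \<omega>) = X \<omega>" "s = (\<Sum>i<n. E i (Y i))"
    using s unfolding SS_def by blast
  define Z where "Z = (\<lambda>i \<omega>. c * Y i \<omega>)"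
  have "c * s = (\<Sum>i<n. E i (Z i))" unfolding Y(3) Z_def sum_distrib_left
    by (rule sum.cong) (use Y(1) E_scale c in auto)
  moreover have "\<forall>\<omega>\<in>space M. (\<Sum>i<n. Z i \<omega>) = c * X \<omega>" unfolding Z_def using Y(2) by (simp add: sum_distrib_left[symmetric])
  moreover have "\<forall>i<n. Z i \<in> bdd_meas M" unfolding Z_def using Y(1) bdd_meas_scale by auto
  ultimately show ?thesis unfolding SS_def by blast
qed

lemma SS_mono:
  assumes s: "s \<in> SS X'" and X: "X \<in> bdd_meas M" and X': "X' \<in> bdd_meas M"
    and le: "\<And>\<omega>. \<omega> \<in> space M \<Longrightarrow> X \<omega> \<le> X' \<omega>"
  shows "\<exists>u\<in>SS X. u \<le> s"
proof -
  obtain Y where Y: "\<forall>i<n. Y i \<in> bdd_meas M" "\<forall>\<omega>\<in>space M. (\<Sum>i<n. Y i \<omega>) = X' \<omega>" "s = (\<Sum>i<n. E i (Y i))"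
    using s unfolding SS_def by blast
  define Z where "Z = (\<lambda>i. if i = 0 then (\<lambda>\<omega>. Y 0 \<omega> + (X \<omega> - X' \<omega>)) else Y i)"
  have n0: "0 < n" using n1 by simp
  have Zb: "\<forall>i<n. Z i \<in> bdd_meas M"
  proof (intro allI impI)
    fix i assume i: "i < n"
    have "(\<lambda>\<omega>. X \<omega> - X' \<omega>) \<in> bdd_meas M"
      using bdd_meas_add[OF X bdd_meas_scale[OF X', of "-1"]] by simp
    then show "Z i \<in> bdd_meas M" unfolding Z_def using Y(1) i n0 bdd_meas_add by auto
  qed
  have sumZ: "(\<Sum>i<n. Z i \<omega>) = (\<Sum>i<n. Y i \<omega>) + (X \<omega> - X' \<omega>)" for \<omega>
  proof -
    have "(\<Sum>i<n. Z i \<omega>) = (\<Sum>i<n. Y i \<omega> + (if i = 0 then X \<omega> - X' \<omega> else 0))"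
      by (rule sum.cong) (auto simp: Z_def)
    also have "\<dots> = (\<Sum>i<n. Y i \<omega>) + (X \<omega> - X' \<omega>)" using n0 by (simp add: sum.distrib)
    finally show ?thesis .
  qed
  have "(\<Sum>i<n. E i (Z i)) \<in> SS X"
    unfolding SS_def using Zb sumZ Y(2) by (intro CollectI exI[of _ Z]) auto
  moreover have "(\<Sum>i<n. E i (Z i)) \<le> s" unfolding Y(3)
  proof (rule sum_mono)
    fix i assume "i \<in> {..<n}"
    then show "E i (Z i) \<le> E i (Y i)"
      using Zb Y(1) le by (cases "i = 0") (auto simp: Z_def intro!: E_mono)
  qed
  ultimately show ?thesis by blast
qed

lemma LB:
  assumes w: "submodular_capacity M w" and wle: "\<forall>A\<in>sets M. w A \<le> Min ((\<lambda>i. ws i A / \<alpha> i) ` {..<n})"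
    and X: "X \<in> bdd_meas M" and s: "s \<in> SS X"
  shows "choquet M w X \<le> s"
proof -
  obtain Y where Y: "\<forall>i<n. Y i \<in> bdd_meas M" "\<forall>\<omega>\<in>space M. (\<Sum>i<n. Y i \<omega>) = X \<omega>" "s = (\<Sum>i<n. E i (Y i))"
    using s unfolding SS_def by blast
  have cw: "capacity M w" using submod_cap[OF w] .
  have "choquet M w X = choquet M w (\<lambda>\<omega>. \<Sum>i<n. Y i \<omega>)" by (rule choquet_cong) (use Y(2) in auto)
  also have "\<dots> \<le> (\<Sum>i<n. choquet M w (Y i))" by (rule choquet_subadd_sum[OF w]) (use Y(1) in auto)
  also have "\<dots> \<le> (\<Sum>i<n. E i (Y i))"
  proof (rule sum_mono)
    fix i assume i: "i \<in> {..<n}"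
    have "w A \<le> dist_cap (\<alpha> i) (ws i) A" if A: "A \<in> sets M" for A
    proof -
      have "w A \<le> Min ((\<lambda>i. ws i A / \<alpha> i) ` {..<n})" using wle A by auto
      also have "\<dots> \<le> ws i A / \<alpha> i" using i by (intro Min_le) auto
      finally show ?thesis unfolding dist_cap_def using cap_le1[OF cw A] by simp
    qed
    then show "choquet M w (Y i) \<le> E i (Y i)"
      using E_ch[of i "Y i"] i Y(1) choquet_mono[OF cw D_cap, of i "Y i" "Y i"] by auto
  qed
  finally show ?thesis unfolding Y(3) .
qed

end

context icsetting begin

lemma UB:
  assumes X0: "X0 \<in> bdd_meas M"
  shows "inf_conv M n E X0 \<le> Sup {ereal (choquet M w X0) | w. submodular_capacity M w \<and>
                   (\<forall>A\<in>sets M. w A \<le> Min ((\<lambda>i. ws i A / \<alpha> i) ` {..<n}))}"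
    (is "_ \<le> Sup ?W")
proof (cases "inf_conv M n E X0 = -\<infinity>")
  case True then show ?thesis by simp
next
  case False
  have n0: "0 < n" using n1 by simp
  obtain s0 where s0: "s0 \<in> SS X0" using SS_ne[OF X0] by blast
  have "(INF s\<in>SS X0. ereal s) \<le> ereal s0" using s0 by (rule INF_lower)
  then have "(INF s\<in>SS X0. ereal s) \<noteq> \<infinity>" by auto
  moreover have "(INF s\<in>SS X0. ereal s) \<noteq> -\<infinity>" using False ic_eq by simp
  ultimately obtain L where L: "(INF s\<in>SS X0. ereal s) = ereal L" by (cases "(INF s\<in>SS X0. ereal s)") auto
  have L0: "L \<le> s" if "s \<in> SS X0" for s
  proof -
    have "ereal L \<le> ereal s" unfolding L[symmetric] using that by (rule INF_lower)
    then show ?thesis by simp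
  qed
  have bb: "bdd_below (SS X)" if X: "X \<in> bdd_meas M" for X
  proof -
    define D where "D = (\<lambda>\<omega>. X0 \<omega> - X \<omega>)"
    have Db: "D \<in> bdd_meas M" unfolding D_def using bdd_meas_add[OF X0 bdd_meas_scale[OF X, of "-1"]] by simp
    obtain t0 where t0: "t0 \<in> SS D" using SS_ne[OF Db] by blast
    have "L - t0 \<le> s" if s: "s \<in> SS X" for s
    proof -
      obtain u where u: "u \<in> SS (\<lambda>\<omega>. X \<omega> + D \<omega>)" "u \<le> s + t0" using SS_add[OF s t0] by blast
      have "SS (\<lambda>\<omega>. X \<omega> + D \<omega>) = SS X0" by (rule SS_cong) (simp add: D_def)
      then show ?thesis using L0[of u] u by simp
    qed
    then show ?thesis by (intro bdd_belowI) 
  qed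
  define r where "r = (\<lambda>X. Inf (SS X))"
  have ic_r: "inf_conv M n E X = ereal (r X)" if "X \<in> bdd_meas M" for X
    unfolding ic_eq r_def using ereal_Inf'[OF bb[OF that] SS_ne[OF that]] by simp
  have r_le: "r X \<le> s" if "X \<in> bdd_meas M" "s \<in> SS X" for X s
    unfolding r_def by (rule cInf_lower[OF that(2) bb[OF that(1)]])
  have r_ge: "c \<le> r X" if "X \<in> bdd_meas M" "\<And>s. s \<in> SS X \<Longrightarrow> c \<le> s" for X c
    unfolding r_def by (rule cInf_greatest[OF SS_ne[OF that(1)]]) (use that in auto)
  have r_sub: "r (\<lambda>\<omega>. X \<omega> + Y \<omega>) \<le> r X + r Y" if X: "X \<in> bdd_meas M" and Y: "Y \<in> bdd_meas M" for X Y
  proof -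
    have XY: "(\<lambda>\<omega>. X \<omega> + Y \<omega>) \<in> bdd_meas M" using bdd_meas_add[OF X Y] .
    have "r (\<lambda>\<omega>. X \<omega> + Y \<omega>) - t \<le> r X" if t: "t \<in> SS Y" for t
    proof (rule r_ge[OF X])
      fix s assume s: "s \<in> SS X"
      obtain u where "u \<in> SS (\<lambda>\<omega>. X \<omega> + Y \<omega>)" "u \<le> s + t" using SS_add[OF s t] by blast
      then show "r (\<lambda>\<omega>. X \<omega> + Y \<omega>) - t \<le> s" using r_le[OF XY] by force
    qed
    note h = this
    have "r (\<lambda>\<omega>. X \<omega> + Y \<omega>) - r X \<le> r Y"
    proof (rule r_ge[OF Y])
      fix t assume "t \<in> SS Y"
      from h[OF this] show "r (\<lambda>\<omega>. X \<omega> + Y \<omega>) - r X \<le> t" by linarith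
    qed
    then show ?thesis by simp
  qed
  have r_sc: "r (\<lambda>\<omega>. c * X \<omega>) = c * r X" if X: "X \<in> bdd_meas M" and c: "0 < c" for X c
  proof (rule antisym)
    have cX: "(\<lambda>\<omega>. c * X \<omega>) \<in> bdd_meas M" by (rule bdd_meas_scale[OF X])
    have "r (\<lambda>\<omega>. c * X \<omega>) / c \<le> r X"
    proof (rule r_ge[OF X])
      fix s assume "s \<in> SS X"
      then have "r (\<lambda>\<omega>. c * X \<omega>) \<le> c * s" using r_le[OF cX] SS_scale c by blast
      then show "r (\<lambda>\<omega>. c * X \<omega>) / c \<le> s" using c by (simp add: field_simps)
    qed
    then show "r (\<lambda>\<omega>. c * X \<omega>) \<le> c * r X" using c by (simp add: field_simps)
    have "r X \<le> r (\<lambda>\<omega>. c * X \<omega>) / c"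
    proof -
      have "r X \<le> u / c" if u: "u \<in> SS (\<lambda>\<omega>. c * X \<omega>)" for u
      proof -
        have a: "(1 / c) * u \<in> SS (\<lambda>\<omega>. (1 / c) * (c * X \<omega>))" by (rule SS_scale[OF u]) (use c in simp)
        have b: "SS (\<lambda>\<omega>. (1 / c) * (c * X \<omega>)) = SS X" by (rule SS_cong) (use c in simp)
        have "(1 / c) * u \<in> SS X" using a b by metis
        then have "r X \<le> (1 / c) * u" by (rule r_le[OF X])
        then show ?thesis by simp
      qed
      then have "\<forall>u\<in>SS (\<lambda>\<omega>. c * X \<omega>). c * r X \<le> u" using c by (simp add: field_simps)
      then have "c * r X \<le> r (\<lambda>\<omega>. c * X \<omega>)" using r_ge[OF cX] by blast
      then show ?thesis using c by (simp add: field_simps)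
    qed
    then show "c * r X \<le> r (\<lambda>\<omega>. c * X \<omega>)" using c by (simp add: field_simps)
  qed
  have r0: "r (\<lambda>\<omega>. 0) = 0"
  proof -
    have "r (\<lambda>\<omega>. 2 * 0) = 2 * r (\<lambda>\<omega>. 0)" by (rule r_sc[OF bdd_meas_const]) simp
    then show ?thesis by simp
  qed
  have r_psc: "r (\<lambda>\<omega>. c * X \<omega>) = c * r X" if X: "X \<in> bdd_meas M" and c: "0 \<le> c" for X c
  proof (cases "c = 0")
    case True then show ?thesis using r0 by simp
  next
    case False then show ?thesis using r_sc[OF X] c by simp
  qed
  have r_mono: "r X \<le> r X'" if X: "X \<in> bdd_meas M" and X': "X' \<in> bdd_meas M"
    and le: "\<And>\<omega>. \<omega> \<in> space M \<Longrightarrow> X \<omega> \<le> X' \<omega>" for X X'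
  proof (rule r_ge[OF X'])
    fix s assume "s \<in> SS X'"
    then obtain u where "u \<in> SS X" "u \<le> s" using SS_mono[OF _ X X' le] by blast
    then show "r X \<le> s" using r_le[OF X] by force
  qed
  have r_E: "r X \<le> E j X" if "j < n" "X \<in> bdd_meas M" for j X
    using r_le[OF that(2) SS_triv[OF that]] .
  obtain f where fadd: "\<And>x y. x \<in> bdd_meas M \<Longrightarrow> y \<in> bdd_meas M \<Longrightarrow> f (\<lambda>\<omega>. x \<omega> + y \<omega>) = f x + f y"
    and fsc: "\<And>x c. x \<in> bdd_meas M \<Longrightarrow> f (\<lambda>\<omega>. c * x \<omega>) = c * f x"
    and fle: "\<And>x. x \<in> bdd_meas M \<Longrightarrow> f x \<le> r x" and fX0: "f X0 = r X0"
  proof -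
    have "\<exists>f. (\<forall>x\<in>bdd_meas M. \<forall>y\<in>bdd_meas M. f (\<lambda>\<omega>. x \<omega> + y \<omega>) = f x + f y)
         \<and> (\<forall>x\<in>bdd_meas M. \<forall>c. f (\<lambda>\<omega>. c * x \<omega>) = c * f x)
         \<and> (\<forall>x\<in>bdd_meas M. f x \<le> r x) \<and> f X0 = r X0"
      by (rule hahn_banach_fun[OF bdd_meas_add bdd_meas_scale r_sub r_psc X0])
    then show ?thesis using that by blast
  qed
  have f0: "f (\<lambda>\<omega>. 0) = 0" using fsc[OF bdd_meas_const[of 1 M], of 0] by simp
  have fmono: "f x \<le> f y" if x: "x \<in> bdd_meas M" and y: "y \<in> bdd_meas M"
    and le: "\<And>\<omega>. \<omega> \<in> space M \<Longrightarrow> x \<omega> \<le> y \<omega>" for x y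
  proof -
    have my: "(\<lambda>\<omega>. (-1) * y \<omega>) \<in> bdd_meas M" by (rule bdd_meas_scale[OF y])
    have d: "(\<lambda>\<omega>. x \<omega> + (-1) * y \<omega>) \<in> bdd_meas M" by (rule bdd_meas_add[OF x my])
    have "f (\<lambda>\<omega>. x \<omega> + (-1) * y \<omega>) = f x - f y" using fadd[OF x my] fsc[OF y, of "-1"] by simp
    moreover have "f (\<lambda>\<omega>. x \<omega> + (-1) * y \<omega>) \<le> r (\<lambda>\<omega>. 0)"
      using fle[OF d] r_mono[OF d bdd_meas_const, of 0] le by force
    ultimately show ?thesis using r0 by simp
  qed
  have r1: "r (\<lambda>\<omega>. 1) = 1"
  proof -
    have a: "r (\<lambda>\<omega>. 1) \<le> 1" using r_E[OF n0 bdd_meas_const] E_const[OF n0] by simp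
    have b: "r (\<lambda>\<omega>. -1) \<le> -1" using r_E[OF n0 bdd_meas_const] E_const[OF n0] by simp
    have "r (\<lambda>\<omega>. 1 + -1) \<le> r (\<lambda>\<omega>. 1) + r (\<lambda>\<omega>. -1)" by (rule r_sub) (auto intro: bdd_meas_const)
    then show ?thesis using a b r0 by simp
  qed
  have f1: "f (\<lambda>\<omega>. 1) = 1"
  proof -
    have "f (\<lambda>\<omega>. 1) \<le> 1" using fle[OF bdd_meas_const[of 1]] r1 by simp
    moreover have "f (\<lambda>\<omega>. (-1) * 1) \<le> r (\<lambda>\<omega>. (-1) * 1)" by (rule fle[OF bdd_meas_const])
    moreover have "r (\<lambda>\<omega>. (-1) * 1) = -1" using r_E[OF n0 bdd_meas_const, of "-1"] E_const[OF n0, of "-1"]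
        r_sub[OF bdd_meas_const bdd_meas_const, of 1 "-1"] r0 r1 by simp
    moreover have "f (\<lambda>\<omega>. (-1) * 1) = - f (\<lambda>\<omega>. 1)" using fsc[OF bdd_meas_const, of "-1" 1] by simp
    ultimately show ?thesis by linarith
  qed
  define w where "w = (\<lambda>A. f (indicator A))"
  have wcap: "capacity M w" unfolding capacity_def
  proof (intro conjI ballI impI)
    fix A B assume A: "A \<in> sets M" and B: "B \<in> sets M" and AB: "A \<subseteq> B"
    show "w A \<le> w B" unfolding w_def
      by (rule fmono[OF bdd_meas_ind[OF A] bdd_meas_ind[OF B]]) (use AB in \<open>auto simp: indicator_def\<close>)
  next
    have "indicator ({}::'a set) = (\<lambda>\<omega>. 0::real)" by (auto simp: fun_eq_iff)
    then show "w {} = 0" unfolding w_def using f0 by metis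
  next
    have sp: "space M \<in> sets M" by simp
    have "f (indicator (space M)) \<le> f (\<lambda>\<omega>. 1)"
      by (rule fmono[OF bdd_meas_ind[OF sp] bdd_meas_const]) (auto simp: indicator_def)
    moreover have "f (\<lambda>\<omega>. 1) \<le> f (indicator (space M))"
      by (rule fmono[OF bdd_meas_const bdd_meas_ind[OF sp]]) (auto simp: indicator_def)
    ultimately show "w (space M) = 1" unfolding w_def using f1 by simp
  qed
  have wsub: "submodular_capacity M w" unfolding submodular_capacity_def
  proof (intro conjI ballI wcap)
    fix A B assume A: "A \<in> sets M" and B: "B \<in> sets M"
    have "w (A \<union> B) + w (A \<inter> B) = f (\<lambda>\<omega>. indicator (A \<union> B) \<omega> + indicator (A \<inter> B) \<omega>)"
      unfolding w_def by (rule fadd[symmetric]) (use A B in \<open>auto intro: bdd_meas_ind\<close>)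
    also have "(\<lambda>\<omega>. indicator (A \<union> B) \<omega> + indicator (A \<inter> B) \<omega>) = (\<lambda>\<omega>. indicator A \<omega> + (indicator B \<omega> :: real))"
      by (auto simp: fun_eq_iff indicator_def)
    also have "f \<dots> = w A + w B" unfolding w_def by (rule fadd) (use A B in \<open>auto intro: bdd_meas_ind\<close>)
    finally show "w (A \<union> B) + w (A \<inter> B) \<le> w A + w B" by simp
  qed
  have wle: "\<forall>A\<in>sets M. w A \<le> Min ((\<lambda>i. ws i A / \<alpha> i) ` {..<n})"
  proof
    fix A assume A: "A \<in> sets M"
    have "w A \<le> ws i A / \<alpha> i" if i: "i < n" for i
    proof -
      have "w A \<le> r (indicator A)" unfolding w_def by (rule fle[OF bdd_meas_ind[OF A]])
      also have "\<dots> \<le> E i (indicator A)" by (rule r_E[OF i bdd_meas_ind[OF A]])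
      also have "\<dots> = dist_cap (\<alpha> i) (ws i) A" by (rule E_ind[OF i A])
      also have "\<dots> \<le> ws i A / \<alpha> i" unfolding dist_cap_def by simp
      finally show ?thesis .
    qed
    then show "w A \<le> Min ((\<lambda>i. ws i A / \<alpha> i) ` {..<n})" using n0 by (subst Min_ge_iff) auto
  qed
  have "choquet M w X0 = f X0" unfolding w_def
    by (rule lin_choquet[OF fadd fsc fmono f1 _ X0]) (use wcap w_def in auto)
  then have "inf_conv M n E X0 = ereal (choquet M w X0)" using ic_r[OF X0] fX0 by simp
  also have "\<dots> \<le> Sup ?W" by (rule Sup_upper) (use wsub wle in blast)
  finally show ?thesis .
qed

lemma part1:
  assumes X: "X \<in> bdd_meas M"
  shows "inf_conv M n E X = Sup {ereal (choquet M w X) | w. submodular_capacity M w \<and>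
                   (\<forall>A\<in>sets M. w A \<le> Min ((\<lambda>i. ws i A / \<alpha> i) ` {..<n}))}"
proof (rule antisym[OF UB[OF X]], unfold ic_eq, rule Sup_least, clarify)
    fix w assume w: "submodular_capacity M w" "\<forall>A\<in>sets M. w A \<le> Min ((\<lambda>i. ws i A / \<alpha> i) ` {..<n})"
    show "ereal (choquet M w X) \<le> (INF s\<in>SS X. ereal s)"
      by (rule INF_greatest) (use LB[OF w X] in simp)
qed

end

theorem corollary4:
  fixes M :: "'a measure" and n :: nat and \<alpha> :: "nat \<Rightarrow> real"
    and ws :: "nat \<Rightarrow> 'a set \<Rightarrow> real"
  assumes "n \<ge> 1"
    and "\<And>i. i < n \<Longrightarrow> 0 < \<alpha> i \<and> \<alpha> i \<le> 1"
    and "\<And>i. i < n \<Longrightarrow> submodular_capacity M (ws i)"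
  shows "(\<forall>X\<in>bdd_meas M.
            inf_conv M n (\<lambda>i. ES M (ws i) (\<alpha> i)) X =
            Sup {ereal (choquet M w X) | w. submodular_capacity M w \<and>
                   (\<forall>A\<in>sets M. w A \<le> Min ((\<lambda>i. ws i A / \<alpha> i) ` {..<n}))})
       \<and> (\<forall>w. submodular_capacity M w \<longrightarrow>
            (\<forall>X\<in>bdd_meas M.
               inf_conv M n (\<lambda>i. ES M w (\<alpha> i)) X = ereal (ES M w (Max (\<alpha> ` {..<n})) X)))"
proof (intro conjI allI impI ballI)
  interpret S: icsetting M n \<alpha> ws using assms by unfold_locales auto
  have Eeq: "(\<lambda>i. ES M (ws i) (\<alpha> i)) = S.E" by (rule ext) (simp add: S.E_def)
  fix X assume X: "X \<in> bdd_meas M"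
  show "inf_conv M n (\<lambda>i. ES M (ws i) (\<alpha> i)) X =
            Sup {ereal (choquet M w X) | w. submodular_capacity M w \<and>
                   (\<forall>A\<in>sets M. w A \<le> Min ((\<lambda>i. ws i A / \<alpha> i) ` {..<n}))}"
    unfolding Eeq by (rule S.part1[OF X])
next
  fix w X assume w: "submodular_capacity M w" and X: "X \<in> bdd_meas M"
  interpret T: icsetting M n \<alpha> "\<lambda>_. w" using assms w by unfold_locales auto
  have Eeq: "(\<lambda>i. ES M w (\<alpha> i)) = T.E" by (rule ext) (simp add: T.E_def)
  have n0: "0 < n" using assms(1) by simp
  define am where "am = Max (\<alpha> ` {..<n})"
  have amin: "am \<in> \<alpha> ` {..<n}" unfolding am_def using n0 by (intro Max_in) auto
  then obtain j where j: "j < n" "\<alpha> j = am" by auto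
  have am: "0 < am" "am \<le> 1" using assms(2)[OF j(1)] j by auto
  have amge: "\<alpha> i \<le> am" if "i < n" for i unfolding am_def using that by (intro Max_ge) auto
  define u where "u = dist_cap am w"
  have usub: "submodular_capacity M u" unfolding u_def by (rule dist_cap_submod[OF w am])
  have cw: "capacity M w" using submod_cap[OF w] .
  have ule: "\<forall>A\<in>sets M. u A \<le> Min ((\<lambda>i. w A / \<alpha> i) ` {..<n})"
  proof
    fix A assume A: "A \<in> sets M"
    have "u A \<le> w A / \<alpha> i" if i: "i < n" for i
    proof -
      have "u A \<le> w A / am" unfolding u_def dist_cap_def by simp
      also have "\<dots> \<le> w A / \<alpha> i"
        using cap_nonneg[OF cw A] assms(2)[OF i] amge[OF i] by (intro divide_left_mono) auto
      finally show ?thesis .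
    qed
    then show "u A \<le> Min ((\<lambda>i. w A / \<alpha> i) ` {..<n})" using n0 by (subst Min_ge_iff) auto
  qed
  have uES: "choquet M u X = ES M w am X" unfolding u_def by (rule ES_choquet[OF cw am X, symmetric])
  show "inf_conv M n (\<lambda>i. ES M w (\<alpha> i)) X = ereal (ES M w (Max (\<alpha> ` {..<n})) X)"
    unfolding Eeq am_def[symmetric]
  proof (rule antisym)
    have "inf_conv M n T.E X \<le> ereal (T.E j X)" unfolding T.ic_eq
      by (rule INF_lower) (rule T.SS_triv[OF j(1) X])
    then show "inf_conv M n T.E X \<le> ereal (ES M w am X)" using j by (simp add: T.E_def)
    have "ereal (choquet M u X) \<le> inf_conv M n T.E X" unfolding T.ic_eq
      by (rule INF_greatest) (use T.LB[OF usub ule X] in simp)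
    then show "ereal (ES M w am X) \<le> inf_conv M n T.E X" using uES by simp
  qed
qed

end
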